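(* Assume the setting in the context (deterministic $\Phi$ with $\operatorname{rank}(\widehat\Phi_1)=k$). Then, for both the spectral and Frobenius norm, $$\|\sin\angle(\mathcal R(Q),\mathcal R(U_k))\|_{2,F}\le\frac{\delta_k^{2q+1}\|\widehat\Phi_2\widehat\Phi_1^\dagger\|_2\,\|\Sigma_\perp\|_{2,F}}{\sigma_k\sqrt{1+\gamma^{4q+4}\|\widehat\Phi_2\widehat\Phi_1^\dagger\|_2^2}},$$ $$\|\sin\angle(\mathcal R(P),\mathcal R(V_k))\|_{2,F}\le\frac{\delta_k^{2q}\|\widehat\Phi_2\widehat\Phi_1^\dagger\|_2\,\|\Sigma_\perp\|_{2,F}}{\sigma_k\sqrt{1+\gamma^{4q+2}\|\widehat\Phi_2\widehat\Phi_1^\dagger\|_2^2}}.$$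
   Context: Let $A\in\mathbb R^{m\times n}$ with $m\ge n$ have full SVD $A=U\Sigma V^T$, with singular values $\sigma_1\ge\sigma_2\ge\dots\ge\sigma_n\ge 0$. Fix an integer $k\ge1$ with $\sigma_k>0$ (the paper regards $A$ as having numerical rank $k$, i.e. $\sigma_k$ well separated from $\sigma_{k+1}$). Write $U=[U_k\ U_\perp]$ with $U_k\in\mathbb R^{m\times k}$ the first $k$ left singular vectors $u_1,\dots,u_k$, $U_\perp\in\mathbb R^{m\times(m-k)}$ the rest; $V=[V_k\ V_\perp]$ with $V_k\in\mathbb R^{n\times k}$ the first $k$ right singular vectors $v_1,\dots,v_k$; $\Sigma_k=\mathrm{diag}(\sigma_1,\dots,\sigma_k)$ and $\Sigma_\perp$ the remaining diagonal block of $\Sigma$ containing $\sigma_{k+1},\dots,\sigma_n$ (so $\|\Sigma_\perp\|_2=\sigma_{k+1}$, $\|\Sigma_\perp\|_F=(\sum_{i>k}\sigma_i^2)^{1/2}$). The notation $\|\cdot\|_{2,F}$ means the statement holds for both the spectral and Frobenius norm. Let $p\ge1$ be an oversampling integer, $d=k+p<n$, and $q\ge0$ an integer (power-iteration parameter). RU-QLP (Randomized Unpivoted QLP): given $\Phi\in\mathbb R^{m\times d}$, let $\bar P\in\mathbb R^{n\times d}$ have orthonormal columns spanning the range of $(A^TA)^qA^T\Phi$ (assumed of rank $d$); compute the thin unpivoted QR factorization $A\bar P=QR$ with $Q\in\mathbb R^{m\times d}$ having orthonormal columns and $R\in\mathbb R^{d\times d}$ upper triangular; compute the thin unpivoted QR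 factorization $R^T=\widetilde P\widetilde R$; set $P=\bar P\widetilde P\in\mathbb R^{n\times d}$ and $L=\widetilde R^T$ (lower triangular), giving $\hat A=QLP^T$. Partition $R=\begin{bmatrix}R_{11}&R_{12}\\0&R_{22}\end{bmatrix}$ and $L=\begin{bmatrix}L_{11}&0\\L_{21}&L_{22}\end{bmatrix}$ with $R_{11},L_{11}\in\mathbb R^{k\times k}$. Define $\widehat\Phi_1=U_k^T\Phi\in\mathbb R^{k\times d}$ and $\widehat\Phi_2=U_\perp^T\Phi\in\mathbb R^{(m-k)\times d}$, assume $\widehat\Phi_1$ has rank $k$, and let $\dagger$ denote the Moore–Penrose inverse. Set $\delta_i=\sigma_{k+1}/\sigma_i$ for $i=1,\dots,k$ and $\gamma=\sigma_n/\sigma_1$. Principal angles between a subspace $\mathcal X$ and a $k$-dimensional subspace $\mathcal Y$ (with $\dim\mathcal X\ge k$) are the $k$ canonical angles $0\le\alpha_1\le\dots\le\alpha_k\le\pi/2$; for orthonormal bases $X$, $Y$, the values $\sin\alpha_i$ are the singular values of $(I-XX^T)Y$. $\sin\angle(\mathcal X,\mathcal Y)$ denotes the $k\times k$ diagonal matrix $\mathrm{diag}(\sin\alpha_1,\dots,\sin\alpha_k)$. *)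

theory Defs
  imports "HOL-Analysis.Analysis" "Jordan_Normal_Form.Matrix" "Jordan_Normal_Form.DL_Rank"
begin

definition vnorm :: "real vec \<Rightarrow> real" where
  "vnorm x = sqrt (x \<bullet> x)"

definition norm2 :: "real mat \<Rightarrow> real" where
  "norm2 M = Sup {vnorm (M *\<^sub>v x) | x. x \<in> carrier_vec (dim_col M) \<and> vnorm x = 1}"

definition normF :: "real mat \<Rightarrow> real" where
  "normF M = sqrt (\<Sum>i<dim_row M. \<Sum>j<dim_col M. (M $$ (i,j))\<^sup>2)"

definition pinv :: "real mat \<Rightarrow> real mat" where
  "pinv M = (THE X. X \<in> carrier_mat (dim_col M) (dim_row M) \<and>
              M * X * M = M \<and> X * M * X = X \<and>
              (M * X)\<^sup>T = M * X \<and> (X * M)\<^sup>T = X * M)"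

definition mat_range :: "real mat \<Rightarrow> real vec set" where
  "mat_range M = {M *\<^sub>v x | x. x \<in> carrier_vec (dim_col M)}"

definition orthonormal_cols :: "real mat \<Rightarrow> bool" where
  "orthonormal_cols M \<longleftrightarrow> M\<^sup>T * M = 1\<^sub>m (dim_col M)"

definition lower_triangular :: "real mat \<Rightarrow> bool" where
  "lower_triangular A \<longleftrightarrow> (\<forall>i < dim_row A. \<forall>j < dim_col A. i < j \<longrightarrow> A $$ (i,j) = 0)"

abbreviation mrank :: "nat \<Rightarrow> real mat \<Rightarrow> nat" where
  "mrank nr M \<equiv> vec_space.rank nr M"

(* Given orthonormal bases X (of the subspace range X) and Y (of a k-dimensional subspace),
   the sines of the principal angles are the singular values of (I - X X^T) Y.
   sin_angle_mat X Y is that matrix; its spectral/Frobenius norm equals the spectral/Frobenius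
   norm of diag(sin alpha_1,...,sin alpha_k). *)
definition sin_angle_mat :: "real mat \<Rightarrow> real mat \<Rightarrow> real mat" where
  "sin_angle_mat X Y = (1\<^sub>m (dim_row X) - X * X\<^sup>T) * Y"

definition first_cols :: "nat \<Rightarrow> real mat \<Rightarrow> real mat" where
  "first_cols k M = mat (dim_row M) k (\<lambda>(i,j). M $$ (i,j))"
definition rest_cols :: "nat \<Rightarrow> real mat \<Rightarrow> real mat" where
  "rest_cols k M = mat (dim_row M) (dim_col M - k) (\<lambda>(i,j). M $$ (i,j+k))"

end

theory Submission
  imports Defs
begin

no_notation inner (infix "\<bullet>" 70)
no_notation vec_nth (infixl "$" 90)

lemma sp_def': "(x::real vec) \<bullet> y = (\<Sum>i<dim_vec y. x$i * y$i)"
  unfolding scalar_prod_def by (simp add: atLeast0LessThan)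

lemma sp_self: "(x::real vec) \<bullet> x = (\<Sum>i<dim_vec x. (x$i)^2)"
  unfolding sp_def' by (simp add: power2_eq_square)

lemma sp_self_ge0: "(x::real vec) \<bullet> x \<ge> 0"
proof -
  have "0 \<le> (\<Sum>i<dim_vec x. (x$i)^2)" by (rule sum_nonneg) simp
  thus ?thesis using sp_self[of x] by linarith
qed

lemma vnorm_ge0: "vnorm x \<ge> 0" unfolding vnorm_def by (simp add: sp_self_ge0)

lemma vnorm_sq: "(vnorm x)^2 = x \<bullet> x"
  unfolding vnorm_def using sp_self_ge0 by simp

lemma sp_self_0: "(x::real vec) \<bullet> x = 0 \<Longrightarrow> x = 0\<^sub>v (dim_vec x)"
proof -
  assume a: "x \<bullet> x = 0"
  have "\<forall>i\<in>{..<dim_vec x}. (x$i)^2 = 0"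
    using a unfolding sp_self by (subst sum_nonneg_eq_0_iff[symmetric]) auto
  thus ?thesis by (intro eq_vecI) auto
qed

lemma CS_vec: assumes "dim_vec x = dim_vec (y::real vec)"
  shows "(x \<bullet> y)^2 \<le> (x \<bullet> x) * (y \<bullet> y)"
  using Cauchy_Schwarz_ineq_sum[of "\<lambda>i. x$i" "\<lambda>i. y$i" "{..<dim_vec y}"] assms
  unfolding sp_def' by (simp add: power2_eq_square)

lemma sp_comm: "dim_vec x = dim_vec (y::real vec) \<Longrightarrow> x \<bullet> y = y \<bullet> x"
  unfolding sp_def' by (simp add: mult.commute)

lemma sp_minus_sq: assumes "dim_vec a = dim_vec (b::real vec)"
  shows "(a - b) \<bullet> (a - b) = a \<bullet> a - 2 * (a \<bullet> b) + b \<bullet> b"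
  using assms unfolding sp_def'
  by (simp add: sum_subtractf sum.distrib sum_distrib_left algebra_simps power2_eq_square)

lemma transpose_sp: assumes "A \<in> carrier_mat nr nc" "x \<in> carrier_vec nc" "(y::real vec) \<in> carrier_vec nr"
  shows "(A\<^sup>T *\<^sub>v y) \<bullet> x = y \<bullet> (A *\<^sub>v x)"
  using transpose_vec_mult_scalar[OF assms] by simp

lemma orth_inv: assumes W: "W \<in> carrier_mat N M" "W\<^sup>T * W = 1\<^sub>m M" and x: "(x::real vec) \<in> carrier_vec M"
  shows "W\<^sup>T *\<^sub>v (W *\<^sub>v x) = x"
proof -
  have "W\<^sup>T *\<^sub>v (W *\<^sub>v x) = (W\<^sup>T * W) *\<^sub>v x" using W x by (subst assoc_mult_mat_vec) auto
  thus ?thesis using W x by simp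
qed

lemma orth_norm: assumes W: "W \<in> carrier_mat N M" "W\<^sup>T * W = 1\<^sub>m M" and x: "(x::real vec) \<in> carrier_vec M"
  shows "(W *\<^sub>v x) \<bullet> (W *\<^sub>v x) = x \<bullet> x"
proof -
  have "(W *\<^sub>v x) \<bullet> (W *\<^sub>v x) = (W\<^sup>T *\<^sub>v (W *\<^sub>v x)) \<bullet> x"
    using transpose_sp[OF W(1) x, of "W *\<^sub>v x"] W x by simp
  thus ?thesis using orth_inv[OF W x] by simp
qed

lemma vnorm_smult: "vnorm (c \<cdot>\<^sub>v x) = \<bar>c\<bar> * vnorm x"
proof -
  have "(c \<cdot>\<^sub>v x) \<bullet> (c \<cdot>\<^sub>v x) = c^2 * (x \<bullet> x)" unfolding sp_def'
    by (simp add: sum_distrib_left power2_eq_square algebra_simps)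
  thus ?thesis unfolding vnorm_def by (simp add: real_sqrt_mult)
qed

lemma normF_sq: "(normF (M::real mat))^2 = (\<Sum>i<dim_row M. \<Sum>j<dim_col M. (M $$ (i,j))^2)"
  unfolding normF_def by (subst real_sqrt_pow2) (auto intro!: sum_nonneg)

lemma row_sp_self: "i < dim_row (M::real mat) \<Longrightarrow> row M i \<bullet> row M i = (\<Sum>j<dim_col M. (M $$ (i,j))^2)"
  unfolding sp_self by (auto intro!: sum.cong)

lemma mult_sq_bound: assumes M: "M \<in> carrier_mat a b" and x: "(x::real vec) \<in> carrier_vec b"
  shows "(M *\<^sub>v x) \<bullet> (M *\<^sub>v x) \<le> (normF M)^2 * (x \<bullet> x)"
proof -
  have "(M *\<^sub>v x) \<bullet> (M *\<^sub>v x) = (\<Sum>i<a. (row M i \<bullet> x)^2)"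
    using M unfolding sp_self by simp
  also have "\<dots> \<le> (\<Sum>i<a. (row M i \<bullet> row M i) * (x \<bullet> x))"
    using M x by (intro sum_mono CS_vec) auto
  also have "\<dots> = (normF M)^2 * (x \<bullet> x)"
    using M unfolding normF_sq by (simp add: sum_distrib_right row_sp_self)
  finally show ?thesis .
qed

lemma mult_vnorm_bound: assumes M: "M \<in> carrier_mat a b" and x: "(x::real vec) \<in> carrier_vec b"
  shows "vnorm (M *\<^sub>v x) \<le> normF M * vnorm x"
proof -
  have "vnorm (M *\<^sub>v x) \<le> sqrt ((normF M)^2 * (x \<bullet> x))"
    unfolding vnorm_def by (rule real_sqrt_le_mono[OF mult_sq_bound[OF M x]])
  also have "\<dots> = normF M * vnorm x" unfolding vnorm_def
    by (simp add: real_sqrt_mult normF_def abs_of_nonneg sum_nonneg)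
  finally show ?thesis .
qed

lemma norm2_bdd: "bdd_above {vnorm (M *\<^sub>v x) | x. x \<in> carrier_vec (dim_col M) \<and> vnorm x = 1}"
  by (rule bdd_aboveI[of _ "normF M"]) (use mult_vnorm_bound[of M "dim_row M" "dim_col M"] in force)

lemma norm2_upper: assumes x: "x \<in> carrier_vec (dim_col M)"
  shows "vnorm (M *\<^sub>v x) \<le> norm2 M * vnorm x"
proof (cases "vnorm x = 0")
  case True
  hence "x \<bullet> x = 0" using vnorm_sq[of x] by simp
  hence "x = 0\<^sub>v (dim_col M)" using sp_self_0[of x] x by (simp add: carrier_vecD)
  hence "M *\<^sub>v x = 0\<^sub>v (dim_row M)" by auto
  hence "vnorm (M *\<^sub>v x) = 0" unfolding vnorm_def by simp
  thus ?thesis using True by simp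
next
  case False
  hence pos: "vnorm x > 0" using vnorm_ge0[of x] by simp
  define y where "y = (1 / vnorm x) \<cdot>\<^sub>v x"
  have y: "y \<in> carrier_vec (dim_col M)" "vnorm y = 1"
    using x pos unfolding y_def vnorm_smult by auto
  have My: "M *\<^sub>v y = (1 / vnorm x) \<cdot>\<^sub>v (M *\<^sub>v x)"
    unfolding y_def using mult_mat_vec[of M "dim_row M" "dim_col M" x] x by auto
  have "vnorm (M *\<^sub>v y) \<le> norm2 M" unfolding norm2_def
    by (rule cSup_upper[OF _ norm2_bdd]) (use y in blast)
  hence "vnorm (M *\<^sub>v x) / vnorm x \<le> norm2 M" unfolding My vnorm_smult using pos by simp
  thus ?thesis using pos by (simp add: divide_le_eq mult.commute)
qed

lemma norm2_le: assumes b: "dim_col M > 0"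
  and B: "\<And>x. x \<in> carrier_vec (dim_col M) \<Longrightarrow> vnorm x = 1 \<Longrightarrow> vnorm (M *\<^sub>v x) \<le> B"
  shows "norm2 M \<le> B"
  unfolding norm2_def
proof (rule cSup_least)
  have "unit_vec (dim_col M) 0 \<in> carrier_vec (dim_col M)" by simp
  moreover have "vnorm (unit_vec (dim_col M) 0) = 1"
  proof -
    have "(\<Sum>i<dim_col M. (if i = 0 then 1 else 0::real)^2) = (\<Sum>i<dim_col M. (if i = 0 then 1 else 0))"
      by (rule sum.cong) auto
    thus ?thesis unfolding vnorm_def sp_self using b by (simp add: unit_vec_def)
  qed
  ultimately show "{vnorm (M *\<^sub>v x) |x. x \<in> carrier_vec (dim_col M) \<and> vnorm x = 1} \<noteq> {}" by blast
qed (use B in blast)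



lemma proj_bound: assumes X: "X \<in> carrier_mat N r" "X\<^sup>T * X = 1\<^sub>m r"
  and v: "(v::real vec) \<in> carrier_vec N" and w: "w \<in> carrier_vec r"
  shows "vnorm ((1\<^sub>m N - X * X\<^sup>T) *\<^sub>v v) \<le> vnorm (v - X *\<^sub>v w)"
proof -
  define u where "u = v - X *\<^sub>v w"
  define b where "b = X\<^sup>T *\<^sub>v u"
  have u: "u \<in> carrier_vec N" unfolding u_def using X v w by auto
  have b: "b \<in> carrier_vec r" unfolding b_def using X u by auto
  have XtX: "X\<^sup>T *\<^sub>v (X *\<^sub>v w) = w" using orth_inv[OF X w] .
  have "X\<^sup>T *\<^sub>v u = X\<^sup>T *\<^sub>v v - X\<^sup>T *\<^sub>v (X *\<^sub>v w)"
    unfolding u_def using X v w by (subst mult_minus_distrib_mat_vec) auto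
  hence Xtv: "X\<^sup>T *\<^sub>v v = b + w" unfolding b_def XtX using X v w
    by (intro eq_vecI) auto
  have "(1\<^sub>m N - X * X\<^sup>T) *\<^sub>v v = 1\<^sub>m N *\<^sub>v v - (X * X\<^sup>T) *\<^sub>v v"
    using X v by (subst minus_mult_distrib_mat_vec) auto
  also have "\<dots> = v - X *\<^sub>v (X\<^sup>T *\<^sub>v v)" using X v by simp
  also have "\<dots> = v - (X *\<^sub>v b + X *\<^sub>v w)" unfolding Xtv using X b w
    by (subst mult_add_distrib_mat_vec) auto
  also have "\<dots> = u - X *\<^sub>v b" unfolding u_def using X b w v by (intro eq_vecI) auto
  finally have eq: "(1\<^sub>m N - X * X\<^sup>T) *\<^sub>v v = u - X *\<^sub>v b" .
  have "(u - X *\<^sub>v b) \<bullet> (u - X *\<^sub>v b) = u \<bullet> u - 2 * (u \<bullet> (X *\<^sub>v b)) + (X *\<^sub>v b) \<bullet> (X *\<^sub>v b)"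
    using u X b by (intro sp_minus_sq) auto
  also have "u \<bullet> (X *\<^sub>v b) = b \<bullet> b" using transpose_sp[OF X(1) b u] unfolding b_def by simp
  also have "(X *\<^sub>v b) \<bullet> (X *\<^sub>v b) = b \<bullet> b" using orth_norm[OF X b] .
  finally have "(u - X *\<^sub>v b) \<bullet> (u - X *\<^sub>v b) \<le> u \<bullet> u" using sp_self_ge0[of b] by simp
  thus ?thesis unfolding eq vnorm_def u_def[symmetric] by simp
qed

definition joinv :: "nat \<Rightarrow> nat \<Rightarrow> real vec \<Rightarrow> real vec \<Rightarrow> real vec" where
  "joinv N k a b = vec N (\<lambda>i. if i < k then a$i else b$(i-k))"

lemma joinv_carrier[simp]: "joinv N k a b \<in> carrier_vec N" unfolding joinv_def by simp
lemma joinv_dim[simp]: "dim_vec (joinv N k a b) = N" unfolding joinv_def by simp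

lemma joinv_sp: assumes "k \<le> N" "a \<in> carrier_vec k" "b \<in> carrier_vec (N-k)"
  shows "joinv N k a b \<bullet> joinv N k a b = a \<bullet> a + b \<bullet> b"
proof -
  have "joinv N k a b \<bullet> joinv N k a b = (\<Sum>i<N. (if i < k then a$i else b$(i-k))^2)"
    unfolding sp_self joinv_def by simp
  also have "\<dots> = (\<Sum>i\<in>{..<k} \<union> {k..<N}. (if i < k then a$i else b$(i-k))^2)"
    using assms(1) by (intro sum.cong) auto
  also have "\<dots> = (\<Sum>i<k. (if i < k then a$i else b$(i-k))^2) + (\<Sum>i\<in>{k..<N}. (if i < k then a$i else b$(i-k))^2)"
    by (rule sum.union_disjoint) auto
  also have "(\<Sum>i<k. (if i < k then a$i else b$(i-k))^2) = a \<bullet> a"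
    unfolding sp_self using assms by simp
  also have "(\<Sum>i\<in>{k..<N}. (if i < k then a$i else b$(i-k))^2) = (\<Sum>i\<in>{k..<N}. (b$(i-k))^2)"
    by (intro sum.cong) auto
  also have "\<dots> = (\<Sum>j\<in>{0..<N-k}. (b$j)^2)"
    using sum.shift_bounds_nat_ivl[of "\<lambda>i. (b$(i-k))^2" 0 k "N-k"] assms(1) by simp
  also have "\<dots> = b \<bullet> b" unfolding sp_self using assms by (simp add: atLeast0LessThan)
  finally show ?thesis .
qed

lemma joinv_minus: "joinv N k a b - joinv N k c d = joinv N k (vec k (\<lambda>i. a$i - c$i)) (vec (N-k) (\<lambda>i. b$i - d$i))"
  unfolding joinv_def by (intro eq_vecI) auto

lemma first_cols_mult: assumes W: "W \<in> carrier_mat N N" and k: "k \<le> N" and x: "x \<in> carrier_vec k"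
  shows "first_cols k W *\<^sub>v x = W *\<^sub>v joinv N k x (0\<^sub>v (N-k))"
proof (rule eq_vecI)
  show "dim_vec (first_cols k W *\<^sub>v x) = dim_vec (W *\<^sub>v joinv N k x (0\<^sub>v (N - k)))"
    using W unfolding first_cols_def by simp
  fix i assume i: "i < dim_vec (W *\<^sub>v joinv N k x (0\<^sub>v (N - k)))"
  hence i: "i < N" using W by simp
  have "(W *\<^sub>v joinv N k x (0\<^sub>v (N - k))) $ i = (\<Sum>j<N. W $$ (i,j) * (if j < k then x$j else 0))"
    using W i by (auto simp: sp_def' joinv_def intro!: sum.cong)
  also have "\<dots> = (\<Sum>j\<in>{..<k} \<union> {k..<N}. W $$ (i,j) * (if j < k then x$j else 0))"
    using k by (intro sum.cong) auto
  also have "\<dots> = (\<Sum>j<k. W $$ (i,j) * (if j < k then x$j else 0))"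
    by (subst sum.union_disjoint) auto
  also have "\<dots> = (first_cols k W *\<^sub>v x) $ i"
    using W i x k by (auto simp: sp_def' first_cols_def intro!: sum.cong)
  finally show "(first_cols k W *\<^sub>v x) $ i = (W *\<^sub>v joinv N k x (0\<^sub>v (N - k))) $ i" by simp
qed

lemma first_cols_carrier[simp]: "W \<in> carrier_mat N M \<Longrightarrow> first_cols k W \<in> carrier_mat N k"
  unfolding first_cols_def by auto

lemma sin_angle_carrier: "X \<in> carrier_mat N r \<Longrightarrow> Y \<in> carrier_mat N k \<Longrightarrow> sin_angle_mat X Y \<in> carrier_mat N k"
  unfolding sin_angle_mat_def by auto

lemma sin_angle_mult: assumes X: "X \<in> carrier_mat N r" and W: "W \<in> carrier_mat N N" and k: "k \<le> N"
  and x: "x \<in> carrier_vec k"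
  shows "sin_angle_mat X (first_cols k W) *\<^sub>v x = (1\<^sub>m N - X * X\<^sup>T) *\<^sub>v (W *\<^sub>v joinv N k x (0\<^sub>v (N-k)))"
proof -
  have "sin_angle_mat X (first_cols k W) *\<^sub>v x = (1\<^sub>m N - X * X\<^sup>T) *\<^sub>v (first_cols k W *\<^sub>v x)"
    unfolding sin_angle_mat_def using X W x by (subst assoc_mult_mat_vec[of _ N N _ k]) auto
  thus ?thesis using first_cols_mult[OF W k x] by simp
qed

lemma core_bound: assumes X: "X \<in> carrier_mat N r" "X\<^sup>T * X = 1\<^sub>m r"
  and W: "W \<in> carrier_mat N N" "W\<^sup>T * W = 1\<^sub>m N" and k: "k \<le> N"
  and H: "H \<in> carrier_mat (N-k) k"
  and hyp: "\<And>x. x \<in> carrier_vec k \<Longrightarrow> \<exists>w\<in>carrier_vec r. W *\<^sub>v joinv N k x (H *\<^sub>v x) = X *\<^sub>v w"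
  and x: "x \<in> carrier_vec k" and y: "y \<in> carrier_vec k"
  shows "(vnorm (sin_angle_mat X (first_cols k W) *\<^sub>v x))^2 \<le> (x - y) \<bullet> (x - y) + (H *\<^sub>v y) \<bullet> (H *\<^sub>v y)"
proof -
  obtain w where w: "w \<in> carrier_vec r" and Ww: "W *\<^sub>v joinv N k y (H *\<^sub>v y) = X *\<^sub>v w" using hyp[OF y] by blast
  define j0 where "j0 = joinv N k x (0\<^sub>v (N-k))"
  define jy where "jy = joinv N k y (H *\<^sub>v y)"
  have "vnorm (sin_angle_mat X (first_cols k W) *\<^sub>v x) \<le> vnorm (W *\<^sub>v j0 - X *\<^sub>v w)"
    unfolding sin_angle_mult[OF X(1) W(1) k x] j0_def using X W w by (intro proj_bound) auto
  also have "W *\<^sub>v j0 - X *\<^sub>v w = W *\<^sub>v (j0 - jy)" unfolding Ww[symmetric] jy_def j0_def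
    using W by (subst mult_minus_distrib_mat_vec) auto
  finally have 1: "(vnorm (sin_angle_mat X (first_cols k W) *\<^sub>v x))^2 \<le> (vnorm (W *\<^sub>v (j0 - jy)))^2"
    using vnorm_ge0 power_mono by blast
  have 2: "(vnorm (W *\<^sub>v (j0 - jy)))^2 = (j0 - jy) \<bullet> (j0 - jy)"
    unfolding vnorm_sq using W by (intro orth_norm) (auto simp: j0_def jy_def)
  have eq: "j0 - jy = joinv N k (vec k (\<lambda>i. x$i - y$i)) (vec (N-k) (\<lambda>i. 0\<^sub>v (N-k) $ i - (H *\<^sub>v y)$i))"
    unfolding j0_def jy_def joinv_minus ..
  have "(j0 - jy) \<bullet> (j0 - jy) = vec k (\<lambda>i. x$i - y$i) \<bullet> vec k (\<lambda>i. x$i - y$i) + vec (N-k) (\<lambda>i. 0\<^sub>v (N-k) $ i - (H *\<^sub>v y)$i) \<bullet> vec (N-k) (\<lambda>i. 0\<^sub>v (N-k) $ i - (H *\<^sub>v y)$i)"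
    unfolding eq using k by (intro joinv_sp) auto
  also have "vec k (\<lambda>i. x$i - y$i) \<bullet> vec k (\<lambda>i. x$i - y$i) = (x - y) \<bullet> (x - y)"
    using x y unfolding sp_self by simp
  also have "vec (N-k) (\<lambda>i. 0\<^sub>v (N-k) $ i - (H *\<^sub>v y)$i) \<bullet> vec (N-k) (\<lambda>i. 0\<^sub>v (N-k) $ i - (H *\<^sub>v y)$i) = (H *\<^sub>v y) \<bullet> (H *\<^sub>v y)"
    using H unfolding sp_self by (auto intro!: sum.cong simp: power2_eq_square)
  finally show ?thesis using 1 2 by simp
qed



lemma vnorm_le_sqrt: "(vnorm v)^2 \<le> B \<Longrightarrow> vnorm v \<le> sqrt B"
  using real_le_rsqrt vnorm_ge0 by blast

lemma core_spec: assumes X: "X \<in> carrier_mat N r" "X\<^sup>T * X = 1\<^sub>m r"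
  and W: "W \<in> carrier_mat N N" "W\<^sup>T * W = 1\<^sub>m N" and k: "k \<le> N" "0 < k"
  and H: "H \<in> carrier_mat (N-k) k"
  and hyp: "\<And>x. x \<in> carrier_vec k \<Longrightarrow> \<exists>w\<in>carrier_vec r. W *\<^sub>v joinv N k x (H *\<^sub>v x) = X *\<^sub>v w"
  and T: "T \<ge> 0" and Tb: "\<And>x. x \<in> carrier_vec k \<Longrightarrow> vnorm (H *\<^sub>v x) \<le> T * vnorm x"
  shows "norm2 (sin_angle_mat X (first_cols k W)) \<le> T / sqrt (1 + T^2)"
proof (rule norm2_le)
  have car: "sin_angle_mat X (first_cols k W) \<in> carrier_mat N k"
    using X W by (intro sin_angle_carrier) auto
  thus "0 < dim_col (sin_angle_mat X (first_cols k W))" using k by simp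
  fix x assume x: "x \<in> carrier_vec (dim_col (sin_angle_mat X (first_cols k W)))" and x1: "vnorm x = 1"
  hence x: "x \<in> carrier_vec k" using car by simp
  define \<alpha> where "\<alpha> = 1 / (1 + T^2)"
  have a0: "\<alpha> \<ge> 0" unfolding \<alpha>_def by simp
  define y where "y = \<alpha> \<cdot>\<^sub>v x"
  have y: "y \<in> carrier_vec k" unfolding y_def using x by simp
  have "(vnorm (sin_angle_mat X (first_cols k W) *\<^sub>v x))^2 \<le> (x - y) \<bullet> (x - y) + (H *\<^sub>v y) \<bullet> (H *\<^sub>v y)"
    by (rule core_bound[OF X W k(1) H hyp x y])
  also have "x - y = (1 - \<alpha>) \<cdot>\<^sub>v x" unfolding y_def using x by (intro eq_vecI) (auto simp: algebra_simps)
  also have "((1 - \<alpha>) \<cdot>\<^sub>v x) \<bullet> ((1 - \<alpha>) \<cdot>\<^sub>v x) = (1 - \<alpha>)^2"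
    unfolding vnorm_sq[symmetric] vnorm_smult x1 by (simp add: power2_abs)
  also have "(H *\<^sub>v y) \<bullet> (H *\<^sub>v y) \<le> (T * \<alpha>)^2"
  proof -
    have "vnorm (H *\<^sub>v y) \<le> T * \<alpha>" using Tb[OF y] unfolding y_def vnorm_smult x1 using a0 by simp
    hence "(vnorm (H *\<^sub>v y))^2 \<le> (T * \<alpha>)^2" using vnorm_ge0 power_mono by blast
    thus ?thesis unfolding vnorm_sq .
  qed
  also have "(1 - \<alpha>)^2 + (T * \<alpha>)^2 = T^2 / (1 + T^2)"
  proof -
    have p: "1 + T^2 > 0" by (simp add: add_pos_nonneg)
    have "1 - \<alpha> = T^2 / (1 + T^2)" unfolding \<alpha>_def using p by (simp add: field_simps)
    hence "(1 - \<alpha>)^2 + (T * \<alpha>)^2 = (T^2 * T^2 + T^2) / (1 + T^2)^2"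
      unfolding \<alpha>_def by (simp add: power_divide power_mult_distrib add_divide_distrib power2_eq_square)
    also have "T^2 * T^2 + T^2 = T^2 * (1 + T^2)" by (simp add: algebra_simps)
    finally show ?thesis using p by (simp add: power2_eq_square)
  qed
  finally have "vnorm (sin_angle_mat X (first_cols k W) *\<^sub>v x) \<le> sqrt (T^2 / (1 + T^2))"
    by (intro vnorm_le_sqrt) simp
  also have "\<dots> = T / sqrt (1 + T^2)" using T by (simp add: real_sqrt_divide)
  finally show "vnorm (sin_angle_mat X (first_cols k W) *\<^sub>v x) \<le> T / sqrt (1 + T^2)" .
qed



lemma mult_unit_index: assumes M: "(M::real mat) \<in> carrier_mat a b" and i: "i < b" and l: "l < a"
  shows "(M *\<^sub>v unit_vec b i) $ l = M $$ (l,i)"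
proof -
  have "(M *\<^sub>v unit_vec b i) $ l = (\<Sum>j<b. M $$ (l,j) * (if j = i then 1 else 0))"
    using M i l by (auto simp: sp_def' intro!: sum.cong)
  also have "\<dots> = M $$ (l,i)" using i by (simp add: if_distrib cong: if_cong)
  finally show ?thesis .
qed

lemma normF_cols: assumes M: "(M::real mat) \<in> carrier_mat a b"
  shows "(normF M)^2 = (\<Sum>i<b. (M *\<^sub>v unit_vec b i) \<bullet> (M *\<^sub>v unit_vec b i))"
proof -
  have "(normF M)^2 = (\<Sum>l<a. \<Sum>i<b. (M $$ (l,i))^2)" unfolding normF_sq using M by simp
  also have "\<dots> = (\<Sum>i<b. \<Sum>l<a. (M $$ (l,i))^2)" by (rule sum.swap)
  also have "\<dots> = (\<Sum>i<b. (M *\<^sub>v unit_vec b i) \<bullet> (M *\<^sub>v unit_vec b i))"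
    using M by (intro sum.cong refl) (simp add: sp_self mult_unit_index)
  finally show ?thesis .
qed

lemma quad_form: assumes H: "H \<in> carrier_mat c k" and y: "(y::real vec) \<in> carrier_vec k"
  shows "((H\<^sup>T * H) *\<^sub>v y) \<bullet> y = (H *\<^sub>v y) \<bullet> (H *\<^sub>v y)"
proof -
  have "(H\<^sup>T * H) *\<^sub>v y = H\<^sup>T *\<^sub>v (H *\<^sub>v y)" using H y by (subst assoc_mult_mat_vec) auto
  moreover have "(H\<^sup>T *\<^sub>v (H *\<^sub>v y)) \<bullet> y = (H *\<^sub>v y) \<bullet> (H *\<^sub>v y)"
    using transpose_sp[OF H y, of "H *\<^sub>v y"] H y by simp
  ultimately show ?thesis by simp
qed

lemma inv_exists: assumes H: "(H::real mat) \<in> carrier_mat c k"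
  shows "\<exists>Z\<in>carrier_mat k k. (1\<^sub>m k + H\<^sup>T * H) * Z = 1\<^sub>m k \<and> Z * (1\<^sub>m k + H\<^sup>T * H) = 1\<^sub>m k"
proof -
  let ?A = "1\<^sub>m k + H\<^sup>T * H"
  have A: "?A \<in> carrier_mat k k" using H by auto
  have "det ?A \<noteq> 0"
  proof
    assume "det ?A = 0"
    then obtain v where v: "v \<in> carrier_vec k" "v \<noteq> 0\<^sub>v k" "?A *\<^sub>v v = 0\<^sub>v k"
      using det_0_iff_vec_prod_zero_field[OF A] by blast
    have e: "?A *\<^sub>v v = v + (H\<^sup>T * H) *\<^sub>v v" using H v by (subst add_mult_distrib_mat_vec) auto
    have "(?A *\<^sub>v v) \<bullet> v = 0" using v(1) unfolding v(3) by simp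
    hence "0 = (v + (H\<^sup>T * H) *\<^sub>v v) \<bullet> v" unfolding e by simp
    also have "\<dots> = v \<bullet> v + ((H\<^sup>T * H) *\<^sub>v v) \<bullet> v" using H v by (subst add_scalar_prod_distrib) auto
    also have "\<dots> = v \<bullet> v + (H *\<^sub>v v) \<bullet> (H *\<^sub>v v)" using quad_form[OF H v(1)] by simp
    finally have "v \<bullet> v = 0" using sp_self_ge0[of v] sp_self_ge0[of "H *\<^sub>v v"] by linarith
    hence "v = 0\<^sub>v k" using sp_self_0[of v] v by simp
    thus False using v by simp
  qed
  from det_non_zero_imp_unit[OF A this, of "()"]
  show ?thesis unfolding Units_def ring_mat_simps by auto
qed

lemma key_ineq: fixes s t yy :: real
  assumes "s \<ge> yy + s^2" "s^2 \<le> t * yy" "t \<ge> 0" "yy \<ge> 0"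
  shows "s \<le> t / (1 + t)"
proof -
  have s0: "s \<ge> 0" using assms(1,4) by (smt (verit) zero_le_power2)
  have "t * s \<ge> t * yy + t * s^2" using assms(1,3) by (metis distrib_left mult_left_mono)
  hence "t * s \<ge> s^2 * (1 + t)" using assms(2) by (simp add: algebra_simps)
  show ?thesis
  proof (cases "s = 0")
    case True thus ?thesis using assms(3) by simp
  next
    case False
    hence "s > 0" using s0 by simp
    from \<open>t * s \<ge> s^2 * (1 + t)\<close> have "t \<ge> s * (1 + t)" using \<open>s > 0\<close>
      by (simp add: power2_eq_square)
    thus ?thesis using assms(3) by (simp add: le_divide_eq mult.commute)
  qed
qed



lemma inv_apply: fixes H Z :: "real mat" assumes H: "H \<in> carrier_mat c k" and Z: "Z \<in> carrier_mat k k"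
  and AZ: "(1\<^sub>m k + H\<^sup>T * H) * Z = 1\<^sub>m k" and v: "(v::real vec) \<in> carrier_vec k"
  shows "Z *\<^sub>v v + (H\<^sup>T * H) *\<^sub>v (Z *\<^sub>v v) = v"
proof -
  have "(1\<^sub>m k + H\<^sup>T * H) *\<^sub>v (Z *\<^sub>v v) = ((1\<^sub>m k + H\<^sup>T * H) * Z) *\<^sub>v v"
    using H Z v by (subst assoc_mult_mat_vec) auto
  also have "\<dots> = v" unfolding AZ using v by simp
  finally have "(1\<^sub>m k + H\<^sup>T * H) *\<^sub>v (Z *\<^sub>v v) = v" .
  moreover have "(1\<^sub>m k + H\<^sup>T * H) *\<^sub>v (Z *\<^sub>v v) = Z *\<^sub>v v + (H\<^sup>T * H) *\<^sub>v (Z *\<^sub>v v)"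
    using H Z v by (subst add_mult_distrib_mat_vec) auto
  ultimately show ?thesis by simp
qed

lemma col_term: fixes H Z :: "real mat" assumes H: "H \<in> carrier_mat c k" and Z: "Z \<in> carrier_mat k k"
  and AZ: "(1\<^sub>m k + H\<^sup>T * H) * Z = 1\<^sub>m k" and i: "i < k"
  shows "(unit_vec k i - Z *\<^sub>v unit_vec k i) \<bullet> (unit_vec k i - Z *\<^sub>v unit_vec k i)
     + (H *\<^sub>v (Z *\<^sub>v unit_vec k i)) \<bullet> (H *\<^sub>v (Z *\<^sub>v unit_vec k i)) = 1 - Z $$ (i,i)"
proof -
  define e where "e = (unit_vec k i :: real vec)"
  define y where "y = Z *\<^sub>v e"
  define g where "g = (H\<^sup>T * H) *\<^sub>v y"
  have e: "e \<in> carrier_vec k" unfolding e_def by simp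
  have y: "y \<in> carrier_vec k" unfolding y_def using Z e by simp
  have g: "g \<in> carrier_vec k" unfolding g_def using H y by simp
  have yg: "y + g = e" unfolding y_def g_def using inv_apply[OF H Z AZ e] .
  have eyg: "e - y = g"
  proof -
    have "e - y = (y + g) - y" using yg by simp
    also have "\<dots> = g" using y g by (intro eq_vecI) auto
    finally show ?thesis .
  qed
  have "(e - y) \<bullet> (e - y) + (H *\<^sub>v y) \<bullet> (H *\<^sub>v y) = g \<bullet> g + g \<bullet> y"
    unfolding eyg g_def using quad_form[OF H y] by simp
  also have "\<dots> = g \<bullet> (g + y)" using g y by (subst scalar_prod_add_distrib) auto
  also have "g + y = e" using yg g y by (simp add: comm_add_vec)
  also have "g \<bullet> e = g $ i" unfolding e_def using i by simp
  also have "g $ i = e $ i - y $ i" using eyg[symmetric] e y i by (simp add: e_def)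
  also have "\<dots> = 1 - Z $$ (i,i)" unfolding y_def e_def using Z i by (simp add: mult_unit_index)
  finally show ?thesis unfolding e_def y_def .
qed

lemma diag_ZG: fixes H Z :: "real mat" assumes H: "H \<in> carrier_mat c k" and Z: "Z \<in> carrier_mat k k"
  and ZA: "Z * (1\<^sub>m k + H\<^sup>T * H) = 1\<^sub>m k" and i: "i < k"
  shows "1 - Z $$ (i,i) = (Z * (H\<^sup>T * H)) $$ (i,i)"
proof -
  have "Z * (1\<^sub>m k + H\<^sup>T * H) = Z * 1\<^sub>m k + Z * (H\<^sup>T * H)"
    using H Z by (subst mult_add_distrib_mat) auto
  hence "1\<^sub>m k = Z + Z * (H\<^sup>T * H)" using ZA Z by simp
  hence "1\<^sub>m k $$ (i,i) = (Z + Z * (H\<^sup>T * H)) $$ (i,i)" by simp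
  thus ?thesis using i Z H by simp
qed

lemma trace_swap: fixes H Z :: "real mat" assumes H: "H \<in> carrier_mat c k" and Z: "Z \<in> carrier_mat k k"
  shows "(\<Sum>i<k. (Z * (H\<^sup>T * H)) $$ (i,i)) = (\<Sum>j<c. row H j \<bullet> (Z *\<^sub>v row H j))"
proof -
  have e1: "(Z * (H\<^sup>T * H)) $$ (i,i) = (\<Sum>l<k. Z $$ (i,l) * (\<Sum>j<c. H $$ (j,l) * H $$ (j,i)))"
    if i: "i < k" for i using H Z i by (auto simp: sp_def' intro!: sum.cong)
  have e2: "row H j \<bullet> (Z *\<^sub>v row H j) = (\<Sum>i<k. H $$ (j,i) * (\<Sum>l<k. Z $$ (i,l) * H $$ (j,l)))"
    if j: "j < c" for j using H Z j by (auto simp: sp_def' intro!: sum.cong)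
  have "(\<Sum>i<k. (Z * (H\<^sup>T * H)) $$ (i,i)) = (\<Sum>i<k. \<Sum>l<k. \<Sum>j<c. Z $$ (i,l) * H $$ (j,l) * H $$ (j,i))"
    using e1 by (simp add: sum_distrib_left mult.assoc)
  also have "\<dots> = (\<Sum>i<k. \<Sum>j<c. \<Sum>l<k. Z $$ (i,l) * H $$ (j,l) * H $$ (j,i))"
    by (rule sum.cong[OF refl], rule sum.swap)
  also have "\<dots> = (\<Sum>j<c. \<Sum>i<k. \<Sum>l<k. Z $$ (i,l) * H $$ (j,l) * H $$ (j,i))"
    by (rule sum.swap)
  also have "\<dots> = (\<Sum>j<c. row H j \<bullet> (Z *\<^sub>v row H j))"
    using e2 by (simp add: sum_distrib_left mult_ac)
  finally show ?thesis .
qed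

lemma per_row: fixes H Z :: "real mat" assumes H: "H \<in> carrier_mat c k" and Z: "Z \<in> carrier_mat k k"
  and AZ: "(1\<^sub>m k + H\<^sup>T * H) * Z = 1\<^sub>m k" and j: "j < c"
  shows "row H j \<bullet> (Z *\<^sub>v row H j) \<le> (row H j \<bullet> row H j) / (1 + row H j \<bullet> row H j)"
proof -
  define h where "h = row H j"
  define y where "y = Z *\<^sub>v h"
  have h: "h \<in> carrier_vec k" unfolding h_def using H j by auto
  have y: "y \<in> carrier_vec k" unfolding y_def using Z h by simp
  have yg: "y + (H\<^sup>T * H) *\<^sub>v y = h" unfolding y_def using inv_apply[OF H Z AZ h] .
  have "h \<bullet> y = y \<bullet> h" using h y by (simp add: sp_comm)
  also have "\<dots> = y \<bullet> y + y \<bullet> ((H\<^sup>T * H) *\<^sub>v y)" unfolding yg[symmetric]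
    using y H by (subst scalar_prod_add_distrib) auto
  also have "y \<bullet> ((H\<^sup>T * H) *\<^sub>v y) = (H *\<^sub>v y) \<bullet> (H *\<^sub>v y)"
    using quad_form[OF H y] y H by (simp add: sp_comm)
  finally have s: "h \<bullet> y = y \<bullet> y + (H *\<^sub>v y) \<bullet> (H *\<^sub>v y)" .
  have "(h \<bullet> y)^2 = ((H *\<^sub>v y) $ j)^2" unfolding h_def using H j by simp
  also have "\<dots> \<le> (H *\<^sub>v y) \<bullet> (H *\<^sub>v y)" unfolding sp_self
    using H j by (intro member_le_sum[of j "{..<dim_vec (H *\<^sub>v y)}" "\<lambda>i. ((H *\<^sub>v y) $ i)^2"]) auto
  finally have s2: "(h \<bullet> y)^2 \<le> (H *\<^sub>v y) \<bullet> (H *\<^sub>v y)" .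
  have cs: "(h \<bullet> y)^2 \<le> (h \<bullet> h) * (y \<bullet> y)" using h y by (intro CS_vec) auto
  have "h \<bullet> y \<le> (h \<bullet> h) / (1 + h \<bullet> h)"
  proof -
    have a1: "h \<bullet> y \<ge> y \<bullet> y + (h \<bullet> y)^2" using s s2 by linarith
    show ?thesis using key_ineq[OF a1 cs sp_self_ge0[of h] sp_self_ge0[of y]] .
  qed
  thus ?thesis unfolding h_def y_def .
qed



lemma core_frob: fixes H :: "real mat"
  assumes X: "X \<in> carrier_mat N r" "X\<^sup>T * X = 1\<^sub>m r"
  and W: "W \<in> carrier_mat N N" "W\<^sup>T * W = 1\<^sub>m N" and k: "k \<le> N"
  and H: "H \<in> carrier_mat (N-k) k"
  and hyp: "\<And>x. x \<in> carrier_vec k \<Longrightarrow> \<exists>w\<in>carrier_vec r. W *\<^sub>v joinv N k x (H *\<^sub>v x) = X *\<^sub>v w"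
  shows "(normF (sin_angle_mat X (first_cols k W)))^2
    \<le> (\<Sum>j<N-k. (row H j \<bullet> row H j) / (1 + row H j \<bullet> row H j))"
proof -
  let ?S = "sin_angle_mat X (first_cols k W)"
  obtain Z where Z: "Z \<in> carrier_mat k k" and AZ: "(1\<^sub>m k + H\<^sup>T * H) * Z = 1\<^sub>m k"
    and ZA: "Z * (1\<^sub>m k + H\<^sup>T * H) = 1\<^sub>m k" using inv_exists[OF H] by blast
  have car: "?S \<in> carrier_mat N k" using X W by (intro sin_angle_carrier) auto
  have "(normF ?S)^2 = (\<Sum>i<k. (?S *\<^sub>v unit_vec k i) \<bullet> (?S *\<^sub>v unit_vec k i))"
    by (rule normF_cols[OF car])
  also have "\<dots> \<le> (\<Sum>i<k. (unit_vec k i - Z *\<^sub>v unit_vec k i) \<bullet> (unit_vec k i - Z *\<^sub>v unit_vec k i)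
     + (H *\<^sub>v (Z *\<^sub>v unit_vec k i)) \<bullet> (H *\<^sub>v (Z *\<^sub>v unit_vec k i)))"
  proof (rule sum_mono)
    fix i assume i: "i \<in> {..<k}"
    show "(?S *\<^sub>v unit_vec k i) \<bullet> (?S *\<^sub>v unit_vec k i) \<le> (unit_vec k i - Z *\<^sub>v unit_vec k i) \<bullet> (unit_vec k i - Z *\<^sub>v unit_vec k i)
     + (H *\<^sub>v (Z *\<^sub>v unit_vec k i)) \<bullet> (H *\<^sub>v (Z *\<^sub>v unit_vec k i))"
      using core_bound[OF X W k H hyp, of "unit_vec k i" "Z *\<^sub>v unit_vec k i"] Z
      unfolding vnorm_sq by simp
  qed
  also have "\<dots> = (\<Sum>i<k. 1 - Z $$ (i,i))"
    using col_term[OF H Z AZ] by (intro sum.cong) auto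
  also have "\<dots> = (\<Sum>i<k. (Z * (H\<^sup>T * H)) $$ (i,i))"
    using diag_ZG[OF H Z ZA] by (intro sum.cong) auto
  also have "\<dots> = (\<Sum>j<N-k. row H j \<bullet> (Z *\<^sub>v row H j))" by (rule trace_swap[OF H Z])
  also have "\<dots> \<le> (\<Sum>j<N-k. (row H j \<bullet> row H j) / (1 + row H j \<bullet> row H j))"
    using per_row[OF H Z AZ] by (intro sum_mono) auto
  finally show ?thesis .
qed



lemma rank_kernel: assumes M: "(M::real mat) \<in> carrier_mat k d" and rk: "mrank k M = k"
  and v: "v \<in> carrier_vec k" and Mv: "M\<^sup>T *\<^sub>v v = 0\<^sub>v d"
  shows "v = 0\<^sub>v k"
proof -
  interpret vs: vec_space "TYPE(real)" k .
  have rk': "vs.rank M = k" using rk .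
  have cols: "set (cols M) \<subseteq> carrier_vec k" using M cols_dim by blast
  obtain S where S: "finite S" "maximal S (\<lambda>T. T \<subseteq> set (cols M) \<and> vs.lin_indpt T)"
    using maximal_exists_superset[of "set (cols M)" "\<lambda>T. T \<subseteq> set (cols M) \<and> vs.lin_indpt T" "{}"]
    by (auto simp: vs.lin_dep_def)
  have cardS: "card S = k" using vs.rank_card_indpt[OF M S(2)] rk' by simp
  have SS: "S \<subseteq> set (cols M)" "vs.lin_indpt S" using S(2) unfolding maximal_def by auto
  have "vs.basis S" using vs.dim_li_is_basis[OF vs.fin_dim S(1) _ SS(2)] SS(1) cols cardS vs.dim_is_n
    by auto
  hence spanS: "vs.span S = carrier_vec k" unfolding vs.basis_def by simp
  define Wv where "Wv = {w \<in> carrier_vec k. v \<bullet> w = 0}"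
  have sub: "submodule class_ring Wv vs.V"
    unfolding submodule_def Wv_def
  proof (intro conjI allI impI)
    show "module class_ring vs.V" by (rule vec_module)
  qed (auto simp: v scalar_prod_add_distrib[OF v] class_ring_simps module_vec_simps)
  have colsW: "set (cols M) \<subseteq> Wv"
  proof
    fix c assume c: "c \<in> set (cols M)"
    then obtain j where j: "j < d" "c = col M j" using M by (auto simp: cols_def)
    have "v \<bullet> c = (M\<^sup>T *\<^sub>v v) $ j" using j M v by (simp add: sp_comm)
    thus "c \<in> Wv" unfolding Wv_def using Mv j c cols by auto
  qed
  have "vs.span S \<subseteq> Wv" using vs.span_is_subset[OF _ sub] SS(1) colsW by blast
  hence "v \<in> Wv" using v spanS by auto
  hence "v \<bullet> v = 0" unfolding Wv_def by simp
  thus ?thesis using sp_self_0[of v] v by simp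
qed



lemma pinv_right: assumes M: "(M::real mat) \<in> carrier_mat k d" and rk: "mrank k M = k"
  shows "pinv M \<in> carrier_mat d k \<and> M * pinv M = 1\<^sub>m k"
proof -
  let ?A = "M * M\<^sup>T"
  have A: "?A \<in> carrier_mat k k" using M by auto
  have Mt: "M\<^sup>T \<in> carrier_mat d k" using M by auto
  have "det ?A \<noteq> 0"
  proof
    assume "det ?A = 0"
    then obtain v where v: "v \<in> carrier_vec k" "v \<noteq> 0\<^sub>v k" "?A *\<^sub>v v = 0\<^sub>v k"
      using det_0_iff_vec_prod_zero_field[OF A] by blast
    have "(?A *\<^sub>v v) \<bullet> v = (M\<^sup>T *\<^sub>v v) \<bullet> (M\<^sup>T *\<^sub>v v)"
      using quad_form[OF Mt v(1)] by simp
    hence "(M\<^sup>T *\<^sub>v v) \<bullet> (M\<^sup>T *\<^sub>v v) = 0" using v by simp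
    hence "M\<^sup>T *\<^sub>v v = 0\<^sub>v d" using sp_self_0[of "M\<^sup>T *\<^sub>v v"] M by simp
    hence "v = 0\<^sub>v k" using rank_kernel[OF M rk v(1)] by simp
    thus False using v by simp
  qed
  from det_non_zero_imp_unit[OF A this, of "()"]
  obtain B where B: "B \<in> carrier_mat k k" "B * ?A = 1\<^sub>m k" "?A * B = 1\<^sub>m k"
    unfolding Units_def ring_mat_simps by auto
  have Bt: "B\<^sup>T \<in> carrier_mat k k" using B by auto
  have At: "?A\<^sup>T = ?A" using transpose_mult[OF M Mt] by simp
  have "B\<^sup>T * ?A = (?A\<^sup>T * B)\<^sup>T" using transpose_mult[of "?A\<^sup>T" k k B k] A B(1) by simp
  also have "\<dots> = 1\<^sub>m k" unfolding At B(3) by simp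
  finally have BtA: "B\<^sup>T * ?A = 1\<^sub>m k" .
  have "B\<^sup>T = B\<^sup>T * (?A * B)" unfolding B(3) using Bt by simp
  also have "\<dots> = (B\<^sup>T * ?A) * B" using assoc_mult_mat[OF Bt A B(1)] by simp
  also have "\<dots> = B" unfolding BtA using B by simp
  finally have Bsym: "B\<^sup>T = B" .
  define X0 where "X0 = M\<^sup>T * B"
  have X0: "X0 \<in> carrier_mat d k" unfolding X0_def using M B by auto
  have MX0: "M * X0 = 1\<^sub>m k" unfolding X0_def using assoc_mult_mat[OF M Mt B(1)] B(3) by simp
  have X0M: "(X0 * M)\<^sup>T = X0 * M"
  proof -
    have "(X0 * M)\<^sup>T = M\<^sup>T * X0\<^sup>T" using transpose_mult[OF X0 M] by simp
    also have "X0\<^sup>T = B\<^sup>T * M" unfolding X0_def using transpose_mult[OF Mt B(1)] by simp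
    also have "M\<^sup>T * (B\<^sup>T * M) = X0 * M" unfolding X0_def Bsym using assoc_mult_mat[OF Mt B(1) M] by simp
    finally show ?thesis .
  qed
  have X0MX0: "X0 * M * X0 = X0" using assoc_mult_mat[OF X0 M X0] MX0 X0 by simp
  have MX0M: "M * X0 * M = M" using MX0 M by simp
  have P0: "X0 \<in> carrier_mat (dim_col M) (dim_row M) \<and> M * X0 * M = M \<and> X0 * M * X0 = X0 \<and>
              (M * X0)\<^sup>T = M * X0 \<and> (X0 * M)\<^sup>T = X0 * M"
    using X0 MX0 X0M M X0MX0 MX0M by simp
  have uniq: "X = X0" if P: "X \<in> carrier_mat (dim_col M) (dim_row M) \<and> M * X * M = M \<and> X * M * X = X \<and>
              (M * X)\<^sup>T = M * X \<and> (X * M)\<^sup>T = X * M" for X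
  proof -
    have X: "X \<in> carrier_mat d k" using P M by simp
    have Xt: "X\<^sup>T \<in> carrier_mat k d" using X by auto
    have XM: "X * M = M\<^sup>T * X\<^sup>T" using P transpose_mult[OF X M] by simp
    have "M = M * X * M" using P by simp
    also have "\<dots> = M * (X * M)" using assoc_mult_mat[OF M X M] .
    also have "\<dots> = M * (M\<^sup>T * X\<^sup>T)" unfolding XM ..
    also have "\<dots> = ?A * X\<^sup>T" using assoc_mult_mat[OF M Mt Xt] by simp
    finally have MA: "M = ?A * X\<^sup>T" .
    have "B * M = B * (?A * X\<^sup>T)" using MA by simp
    also have "\<dots> = (B * ?A) * X\<^sup>T" using assoc_mult_mat[OF B(1) A Xt] by simp
    also have "\<dots> = X\<^sup>T" unfolding B(2) using Xt by simp
    finally have "X\<^sup>T = B * M" by simp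
    hence "X = (B * M)\<^sup>T" by (metis transpose_transpose)
    also have "\<dots> = M\<^sup>T * B\<^sup>T" using transpose_mult[OF B(1) M] .
    also have "\<dots> = X0" unfolding X0_def Bsym ..
    finally show ?thesis .
  qed
  have "pinv M = X0" unfolding pinv_def by (rule the_equality) (use P0 uniq in blast)+
  thus ?thesis using X0 MX0 by simp
qed



lemma g_bound: fixes r u L :: real
  assumes "0 \<le> r" "r \<le> u^2" "0 \<le> L" "L \<le> u"
  shows "r / (1 + r) \<le> u^2 / (1 + L^2)"
proof -
  have L2: "L^2 \<le> u^2" using assms(3,4) power_mono by blast
  show ?thesis
  proof (cases "r \<ge> L^2")
    case True
    have "r / (1 + r) \<le> r / (1 + L^2)" using True assms(1)
      by (intro divide_left_mono) (auto intro!: mult_pos_pos add_pos_nonneg)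
    also have "\<dots> \<le> u^2 / (1 + L^2)" using assms(2) by (intro divide_right_mono) auto
    finally show ?thesis .
  next
    case False
    have "r / (1 + r) \<le> L^2 / (1 + L^2)"
      using False assms(1) by (simp add: field_simps add_pos_nonneg)
    also have "\<dots> \<le> u^2 / (1 + L^2)" using L2 by (intro divide_right_mono) auto
    finally show ?thesis .
  qed
qed



lemma normF_ge0: "normF M \<ge> 0" unfolding normF_def by (intro real_sqrt_ge_zero sum_nonneg) auto

lemma pow2a: assumes "a \<ge> (1::nat)" shows "(x::real)^(2*a) = x^(2*a-2) * x^2"
proof -
  have "2*a = (2*a-2) + 2" using assms by simp
  hence "x^(2*a) = x^((2*a-2) + 2)" by simp
  thus ?thesis by (simp only: power_add)
qed

lemma final_part:
  fixes X W H :: "real mat" and \<sigma> :: "nat \<Rightarrow> real" and a N r k n :: nat and c nTwo nFro :: real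
  assumes X: "X \<in> carrier_mat N r" "X\<^sup>T * X = 1\<^sub>m r"
  and W: "W \<in> carrier_mat N N" "W\<^sup>T * W = 1\<^sub>m N" and kN: "k \<le> N" and k0: "0 < k" and kn: "k < n"
  and nN: "n \<le> N"
  and H: "H \<in> carrier_mat (N-k) k"
  and hyp: "\<And>x. x \<in> carrier_vec k \<Longrightarrow> \<exists>w\<in>carrier_vec r. W *\<^sub>v joinv N k x (H *\<^sub>v x) = X *\<^sub>v w"
  and mono: "\<And>i j. 1 \<le> i \<Longrightarrow> i \<le> j \<Longrightarrow> j \<le> n \<Longrightarrow> \<sigma> j \<le> \<sigma> i"
  and nonneg: "\<And>i. 1 \<le> i \<Longrightarrow> i \<le> n \<Longrightarrow> 0 \<le> \<sigma> i"
  and sk: "\<sigma> k > 0" and a: "a \<ge> 1" and c: "c \<ge> 0"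
  and rows: "\<And>j. j < N-k \<Longrightarrow> row H j \<bullet> row H j \<le> (if j+k < n then \<sigma>(j+k+1)^a else 0)^2 * c^2 / \<sigma> k^(2*a)"
  and spec: "\<And>x. x \<in> carrier_vec k \<Longrightarrow> vnorm (H *\<^sub>v x) \<le> (\<sigma>(k+1)^a * c / \<sigma> k^a) * vnorm x"
  and S2: "nTwo \<ge> \<sigma>(k+1)" and SF: "nFro \<ge> 0" "nFro^2 \<ge> (\<Sum>j<n-k. \<sigma>(j+k+1)^2)"
  shows "norm2 (sin_angle_mat X (first_cols k W)) \<le> (\<sigma>(k+1)/\<sigma> k)^(a-1) * c * nTwo / (\<sigma> k * sqrt(1 + (\<sigma> n/\<sigma> 1)^(2*a) * c^2))
   \<and> normF (sin_angle_mat X (first_cols k W)) \<le> (\<sigma>(k+1)/\<sigma> k)^(a-1) * c * nFro / (\<sigma> k * sqrt(1 + (\<sigma> n/\<sigma> 1)^(2*a) * c^2))"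
proof -
  let ?S = "sin_angle_mat X (first_cols k W)"
  define \<delta> where "\<delta> = \<sigma>(k+1)/\<sigma> k"
  define \<gamma> where "\<gamma> = \<sigma> n/\<sigma> 1"
  define T where "T = \<sigma>(k+1)^a * c / \<sigma> k^a"
  define L where "L = \<gamma>^a * c"
  have s1k: "\<sigma> k \<le> \<sigma> 1" using mono[of 1 k] k0 kn by simp
  have s1: "\<sigma> 1 > 0" using s1k sk by simp
  have sk1: "\<sigma> (k+1) \<le> \<sigma> k" using mono[of k "k+1"] k0 kn by simp
  have sk1n: "0 \<le> \<sigma> (k+1)" using nonneg[of "k+1"] kn by simp
  have snk: "\<sigma> n \<le> \<sigma> (k+1)" using mono[of "k+1" n] kn by simp
  have sn0: "0 \<le> \<sigma> n" using nonneg[of n] kn by simp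
  have d0: "0 \<le> \<delta>" unfolding \<delta>_def using sk sk1n by simp
  have g0: "0 \<le> \<gamma>" unfolding \<gamma>_def using s1 sn0 by simp
  have gd: "\<gamma> \<le> \<delta>" unfolding \<gamma>_def \<delta>_def using sk s1 snk s1k sn0 sk1n
    by (simp add: frac_le)
  have Td: "T = \<delta>^a * c" unfolding T_def \<delta>_def by (simp add: power_divide)
  have T0: "0 \<le> T" unfolding Td using d0 c by simp
  have L0: "0 \<le> L" unfolding L_def using g0 c by simp
  have LT: "L \<le> T" unfolding L_def Td using gd g0 c by (intro mult_right_mono power_mono) auto
  have LL: "(\<sigma> n/\<sigma> 1)^(2*a) * c^2 = L^2" unfolding L_def \<gamma>_def by (simp add: power_mult_distrib power_mult[symmetric] mult.commute)
  have den: "sqrt (1 + L^2) > 0" by (simp add: add_pos_nonneg)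
  have part1: "norm2 ?S \<le> \<delta>^(a-1) * c * nTwo / (\<sigma> k * sqrt(1 + L^2))"
  proof -
    have "norm2 ?S \<le> T / sqrt (1 + T^2)"
      by (rule core_spec[OF X W kN k0 H hyp T0]) (use spec T_def in auto)
    also have "\<dots> \<le> T / sqrt (1 + L^2)"
      using T0 L0 LT den by (intro divide_left_mono real_sqrt_le_mono) (auto intro!: power_mono mult_pos_pos simp: add_pos_nonneg)
    also have "T = \<delta>^(a-1) * c * \<sigma>(k+1) / \<sigma> k"
    proof -
      have "\<delta>^a = \<delta>^(a-1) * \<delta>" using a by (metis power_minus_mult le_add_diff_inverse2 add_gr_0 less_one not_le zero_less_one)
      thus ?thesis unfolding Td \<delta>_def by simp
    qed
    also have "\<delta>^(a-1) * c * \<sigma>(k+1) / \<sigma> k / sqrt (1 + L^2) \<le> \<delta>^(a-1) * c * nTwo / \<sigma> k / sqrt (1 + L^2)"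
      using d0 c S2 sk den by (intro divide_right_mono mult_left_mono) auto
    finally show ?thesis by (simp add: divide_divide_eq_left)
  qed
  have part2: "normF ?S \<le> \<delta>^(a-1) * c * nFro / (\<sigma> k * sqrt(1 + L^2))"
  proof -
    define u where "u j = \<sigma>(j+k+1)^a * c / \<sigma> k^a" for j
    define R where "R = \<sigma>(k+1)^(2*a-2) * c^2 / \<sigma> k^(2*a)"
    have R0: "R \<ge> 0" unfolding R_def using sk1n sk by simp
    have L2: "1 + L^2 > 0" by (simp add: add_pos_nonneg)
    have "(normF ?S)^2 \<le> (\<Sum>j<N-k. (row H j \<bullet> row H j) / (1 + row H j \<bullet> row H j))"
      by (rule core_frob[OF X W kN H hyp])
    also have "\<dots> \<le> (\<Sum>j<N-k. if j < n-k then u j^2 / (1 + L^2) else 0)"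
    proof (rule sum_mono)
      fix j assume j: "j \<in> {..<N-k}"
      have r0: "0 \<le> row H j \<bullet> row H j" by (rule sp_self_ge0)
      show "(row H j \<bullet> row H j) / (1 + row H j \<bullet> row H j) \<le> (if j < n-k then u j^2 / (1 + L^2) else 0)"
      proof (cases "j < n-k")
        case True
        hence jn: "j + k < n" by simp
        have "row H j \<bullet> row H j \<le> (\<sigma>(j+k+1)^a)^2 * c^2 / \<sigma> k^(2*a)" using rows[of j] j jn by simp
        also have "\<dots> = (u j)^2" unfolding u_def by (simp add: power_divide power_mult_distrib power_mult[symmetric] mult.commute)
        finally have ru: "row H j \<bullet> row H j \<le> (u j)^2" .
        have sj: "\<sigma> n \<le> \<sigma>(j+k+1)" using mono[of "j+k+1" n] jn by simp
        have sj0: "0 \<le> \<sigma>(j+k+1)" using nonneg[of "j+k+1"] jn by simp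
        have "\<gamma> \<le> \<sigma>(j+k+1) / \<sigma> k" unfolding \<gamma>_def using sk s1 sj s1k sn0 by (simp add: frac_le)
        hence "\<gamma>^a \<le> (\<sigma>(j+k+1) / \<sigma> k)^a" using g0 by (intro power_mono) auto
        hence "\<gamma>^a * c \<le> (\<sigma>(j+k+1) / \<sigma> k)^a * c" using c by (rule mult_right_mono)
        hence Lu: "L \<le> u j" unfolding L_def u_def by (simp add: power_divide)
        show ?thesis using True g_bound[OF r0 ru L0 Lu] by simp
      next
        case False
        hence "\<not> j + k < n" by simp
        hence "row H j \<bullet> row H j \<le> 0" using rows[of j] j by simp
        hence "row H j \<bullet> row H j = 0" using r0 by simp
        thus ?thesis using False by simp
      qed
    qed
    also have "\<dots> = (\<Sum>j<n-k. u j^2 / (1 + L^2))"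
    proof -
      have "(\<Sum>j<N-k. if j < n-k then u j^2 / (1 + L^2) else 0) = (\<Sum>j\<in>{..<N-k} \<inter> {j. j < n-k}. u j^2 / (1 + L^2))"
        by (simp add: sum.inter_restrict)
      also have "{..<N-k} \<inter> {j. j < n-k} = {..<n-k}" using nN by auto
      finally show ?thesis .
    qed
    also have "\<dots> \<le> (\<Sum>j<n-k. R * \<sigma>(j+k+1)^2 / (1 + L^2))"
    proof (rule sum_mono)
      fix j assume j: "j \<in> {..<n-k}"
      hence jn: "j + k + 1 \<le> n" by auto
      have sj0: "0 \<le> \<sigma>(j+k+1)" using nonneg[of "j+k+1"] jn by simp
      have sjk: "\<sigma>(j+k+1) \<le> \<sigma>(k+1)" using mono[of "k+1" "j+k+1"] jn by simp
      have pa: "\<sigma>(j+k+1)^(2*a) = \<sigma>(j+k+1)^(2*a-2) * \<sigma>(j+k+1)^2"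
        using pow2a[OF a] by simp
      have "\<sigma>(j+k+1)^(2*a-2) \<le> \<sigma>(k+1)^(2*a-2)" using sj0 sjk by (intro power_mono) auto
      hence "\<sigma>(j+k+1)^(2*a) \<le> \<sigma>(k+1)^(2*a-2) * \<sigma>(j+k+1)^2" unfolding pa
        by (intro mult_right_mono) auto
      hence "\<sigma>(j+k+1)^(2*a) * c^2 / \<sigma> k^(2*a) \<le> \<sigma>(k+1)^(2*a-2) * \<sigma>(j+k+1)^2 * c^2 / \<sigma> k^(2*a)"
        using sk by (intro divide_right_mono mult_right_mono) auto
      moreover have "(u j)^2 = \<sigma>(j+k+1)^(2*a) * c^2 / \<sigma> k^(2*a)"
        unfolding u_def by (simp add: power_divide power_mult_distrib power_mult[symmetric] mult.commute)
      ultimately have "(u j)^2 \<le> R * \<sigma>(j+k+1)^2" unfolding R_def by (simp add: mult_ac)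
      thus "u j^2 / (1 + L^2) \<le> R * \<sigma>(j+k+1)^2 / (1 + L^2)" using L2 by (intro divide_right_mono) auto
    qed
    also have "\<dots> = R * (\<Sum>j<n-k. \<sigma>(j+k+1)^2) / (1 + L^2)"
      by (simp add: sum_divide_distrib sum_distrib_left)
    also have "\<dots> \<le> R * nFro^2 / (1 + L^2)" using R0 SF L2 by (intro divide_right_mono mult_left_mono) auto
    also have "\<dots> = (\<delta>^(a-1) * c * nFro / (\<sigma> k * sqrt(1 + L^2)))^2"
    proof -
      have "(\<delta>^(a-1))^2 = \<sigma>(k+1)^(2*a-2) / \<sigma> k^(2*a-2)" unfolding \<delta>_def
        by (simp add: power_divide power_mult[symmetric] mult.commute diff_mult_distrib2)
      moreover have "\<sigma> k^(2*a) = \<sigma> k^(2*a-2) * \<sigma> k^2" using pow2a[OF a] by simp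
      ultimately show ?thesis unfolding R_def using L2 sk
        by (simp add: power_divide power_mult_distrib real_sqrt_pow2 add_pos_nonneg)
    qed
    finally have sq: "(normF ?S)^2 \<le> (\<delta>^(a-1) * c * nFro / (\<sigma> k * sqrt(1 + L^2)))^2" .
    have "0 \<le> \<delta>^(a-1) * c * nFro / (\<sigma> k * sqrt(1 + L^2))" using d0 c SF(1) sk den by simp
    thus ?thesis using power2_le_imp_le[OF sq] by simp
  qed
  show ?thesis using part1 part2 unfolding LL \<delta>_def by simp
qed



lemma norm2_ge0': assumes "dim_col M > 0" shows "norm2 M \<ge> 0"
proof -
  have "unit_vec (dim_col M) 0 \<in> carrier_vec (dim_col M)" by simp
  from norm2_upper[OF this] have "vnorm (M *\<^sub>v unit_vec (dim_col M) 0) \<le> norm2 M * vnorm (unit_vec (dim_col M) 0)" .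
  moreover have "vnorm (unit_vec (dim_col M) 0) = 1"
  proof -
    have "(\<Sum>i<dim_col M. (if i = 0 then 1 else 0::real)^2) = (\<Sum>i<dim_col M. (if i = 0 then 1 else 0))"
      by (rule sum.cong) auto
    thus ?thesis unfolding vnorm_def sp_self using assms by (simp add: unit_vec_def)
  qed
  ultimately show ?thesis using vnorm_ge0 by (metis mult.right_neutral order_trans)
qed

lemma row_le_norm2: assumes F: "(F::real mat) \<in> carrier_mat a b" and j: "j < a"
  shows "row F j \<bullet> row F j \<le> (norm2 F)^2"
proof -
  define r where "r = row F j"
  have r: "r \<in> carrier_vec b" unfolding r_def using F j by auto
  have "r \<bullet> r = (F *\<^sub>v r) $ j" unfolding r_def using F j by simp
  also have "\<dots> \<le> vnorm (F *\<^sub>v r)"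
  proof -
    have "((F *\<^sub>v r) $ j)^2 \<le> (F *\<^sub>v r) \<bullet> (F *\<^sub>v r)" unfolding sp_self
      using F j by (intro member_le_sum[of j "{..<dim_vec (F *\<^sub>v r)}" "\<lambda>i. ((F *\<^sub>v r) $ i)^2"]) auto
    hence "\<bar>(F *\<^sub>v r) $ j\<bar> \<le> vnorm (F *\<^sub>v r)" unfolding vnorm_def by (simp add: real_le_rsqrt)
    thus ?thesis by simp
  qed
  also have "\<dots> \<le> norm2 F * vnorm r" using norm2_upper[of r F] r F by simp
  finally have 1: "r \<bullet> r \<le> norm2 F * vnorm r" .
  show ?thesis
  proof (cases "vnorm r = 0")
    case True thus ?thesis using vnorm_sq[of r] unfolding r_def by simp
  next
    case False
    hence vp: "vnorm r > 0" using vnorm_ge0[of r] by simp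
    have "(vnorm r)^2 \<le> norm2 F * vnorm r" using 1 vnorm_sq[of r] by simp
    hence "vnorm r \<le> norm2 F" using vp by (simp add: power2_eq_square)
    hence "(vnorm r)^2 \<le> (norm2 F)^2" using vnorm_ge0 power_mono by blast
    thus ?thesis using vnorm_sq[of r] unfolding r_def by simp
  qed
qed

lemma H_rows: assumes F: "(F::real mat) \<in> carrier_mat M' k" and NM: "N - k \<le> M'"
  and Hd: "H = mat (N-k) k (\<lambda>(j,l). e (j+k) * F $$ (j,l) / s l)"
  and s: "\<And>l. l < k \<Longrightarrow> s l \<ge> S0" and S0: "S0 > 0" and j: "j < N - k"
  shows "row H j \<bullet> row H j \<le> (e (j+k))^2 * (norm2 F)^2 / S0^2"
proof -
  have "row H j \<bullet> row H j = (\<Sum>l<k. (e (j+k) * F $$ (j,l) / s l)^2)"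
    unfolding Hd sp_self using j by simp
  also have "\<dots> \<le> (\<Sum>l<k. (e (j+k))^2 / S0^2 * (F $$ (j,l))^2)"
  proof (rule sum_mono)
    fix l assume l: "l \<in> {..<k}"
    have sl: "s l \<ge> S0" using s l by simp
    hence "S0^2 \<le> (s l)^2" using S0 by (intro power_mono) auto
    moreover have "s l > 0" using sl S0 by simp
    ultimately have "1 / (s l)^2 \<le> 1 / S0^2" using S0 by (intro divide_left_mono) (auto intro!: mult_pos_pos)
    hence "(e (j+k))^2 * (F $$ (j,l))^2 * (1 / (s l)^2) \<le> (e (j+k))^2 * (F $$ (j,l))^2 * (1 / S0^2)"
      by (intro mult_left_mono) auto
    thus "(e (j+k) * F $$ (j,l) / s l)^2 \<le> (e (j+k))^2 / S0^2 * (F $$ (j,l))^2"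
      by (simp add: power_divide power_mult_distrib)
  qed
  also have "\<dots> = (e (j+k))^2 / S0^2 * (row F j \<bullet> row F j)"
    using F j NM by (simp add: row_sp_self sum_distrib_left)
  also have "\<dots> \<le> (e (j+k))^2 / S0^2 * (norm2 F)^2"
    using row_le_norm2[OF F, of j] j NM by (intro mult_left_mono) auto
  finally show ?thesis by simp
qed

lemma H_spec: assumes F: "(F::real mat) \<in> carrier_mat M' k" and NM: "N - k \<le> M'"
  and Hd: "H = mat (N-k) k (\<lambda>(j,l). e (j+k) * F $$ (j,l) / s l)"
  and s: "\<And>l. l < k \<Longrightarrow> s l \<ge> S0" and S0: "S0 > 0"
  and E: "\<And>j. j < N - k \<Longrightarrow> \<bar>e (j+k)\<bar> \<le> E" and x: "x \<in> carrier_vec k"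
  and E0: "E \<ge> 0" and k0: "0 < k"
  shows "vnorm (H *\<^sub>v x) \<le> (E * norm2 F / S0) * vnorm x"
proof -
  define x' where "x' = vec k (\<lambda>l. x$l / s l)"
  have x': "x' \<in> carrier_vec k" unfolding x'_def by simp
  have Hx: "(H *\<^sub>v x) $ j = e (j+k) * (F *\<^sub>v x') $ j" if j: "j < N - k" for j
    unfolding Hd x'_def using j NM F x by (auto simp: sp_def' sum_distrib_left intro!: sum.cong)
  have "(H *\<^sub>v x) \<bullet> (H *\<^sub>v x) = (\<Sum>j<N-k. (e (j+k))^2 * ((F *\<^sub>v x') $ j)^2)"
    unfolding sp_self using Hx Hd by (simp add: power_mult_distrib)
  also have "\<dots> \<le> (\<Sum>j<N-k. E^2 * ((F *\<^sub>v x') $ j)^2)"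
  proof (rule sum_mono)
    fix j assume "j \<in> {..<N-k}"
    hence "\<bar>e (j+k)\<bar> \<le> E" using E by simp
    hence "(e (j+k))^2 \<le> E^2" by (metis abs_ge_zero power2_abs power_mono)
    thus "(e (j+k))^2 * ((F *\<^sub>v x') $ j)^2 \<le> E^2 * ((F *\<^sub>v x') $ j)^2" by (intro mult_right_mono) auto
  qed
  also have "\<dots> \<le> (\<Sum>j<M'. E^2 * ((F *\<^sub>v x') $ j)^2)"
    using NM by (intro sum_mono2) auto
  also have "\<dots> = E^2 * ((F *\<^sub>v x') \<bullet> (F *\<^sub>v x'))" unfolding sp_self using F by (simp add: sum_distrib_left)
  also have "\<dots> \<le> E^2 * ((norm2 F)^2 * (x' \<bullet> x'))"
  proof -
    have "vnorm (F *\<^sub>v x') \<le> norm2 F * vnorm x'" using norm2_upper[of x' F] x' F by simp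
    hence "(vnorm (F *\<^sub>v x'))^2 \<le> (norm2 F * vnorm x')^2" using vnorm_ge0 power_mono by blast
    thus ?thesis unfolding vnorm_sq power_mult_distrib by (intro mult_left_mono) auto
  qed
  also have "x' \<bullet> x' \<le> (x \<bullet> x) / S0^2"
  proof -
    have "x' \<bullet> x' = (\<Sum>l<k. (x$l / s l)^2)" unfolding sp_self x'_def by simp
    also have "\<dots> \<le> (\<Sum>l<k. (x$l)^2 / S0^2)"
    proof (rule sum_mono)
      fix l assume l: "l \<in> {..<k}"
      have "S0^2 \<le> (s l)^2" using s[of l] l S0 by (intro power_mono) auto
      moreover have "s l > 0" using s[of l] l S0 by simp
      ultimately have "(x$l)^2 / (s l)^2 \<le> (x$l)^2 / S0^2" using S0 by (intro divide_left_mono) (auto intro!: mult_pos_pos)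
      thus "(x$l / s l)^2 \<le> (x$l)^2 / S0^2" by (simp add: power_divide)
    qed
    also have "\<dots> = (x \<bullet> x) / S0^2" unfolding sp_self using x by (simp add: sum_divide_distrib)
    finally show ?thesis .
  qed
  hence "E^2 * ((norm2 F)^2 * (x' \<bullet> x')) \<le> E^2 * ((norm2 F)^2 * ((x \<bullet> x) / S0^2))"
    by (intro mult_left_mono) auto
  finally have "(vnorm (H *\<^sub>v x))^2 \<le> ((E * norm2 F / S0) * vnorm x)^2"
    unfolding vnorm_sq by (simp add: power_mult_distrib power_divide vnorm_sq[symmetric])
  moreover have "0 \<le> (E * norm2 F / S0) * vnorm x"
    using E0 S0 vnorm_ge0[of x] norm2_ge0'[of F] F k0 by simp
  ultimately show ?thesis using power2_le_imp_le by blast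
qed



lemma build_hyp:
  fixes Phi1 Phi2 Pi X W H :: "real mat" and \<Psi> :: "real vec \<Rightarrow> real vec" and s e :: "nat \<Rightarrow> real"
  assumes Phi1: "Phi1 \<in> carrier_mat k d" and Pi: "Pi \<in> carrier_mat d k" and PP: "Phi1 * Pi = 1\<^sub>m k"
  and Phi2: "Phi2 \<in> carrier_mat (m-k) d" and kN: "k \<le> N" and Nm: "N \<le> m"
  and psi1: "\<And>z i. z \<in> carrier_vec d \<Longrightarrow> i < k \<Longrightarrow> (Phi1 *\<^sub>v z) $ i = (\<Psi> z) $ i"
  and psi2: "\<And>z j. z \<in> carrier_vec d \<Longrightarrow> j < m-k \<Longrightarrow> (Phi2 *\<^sub>v z) $ j = (\<Psi> z) $ (j+k)"
  and s: "\<And>i. i < k \<Longrightarrow> s i \<noteq> 0" and es: "\<And>i. i < k \<Longrightarrow> e i = s i"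
  and rng: "\<And>z. z \<in> carrier_vec d \<Longrightarrow> \<exists>w\<in>carrier_vec r. W *\<^sub>v vec N (\<lambda>i. e i * (\<Psi> z) $ i) = X *\<^sub>v w"
  and Hd: "H = mat (N-k) k (\<lambda>(j,l). e (j+k) * (Phi2 * Pi) $$ (j,l) / s l)"
  and x: "x \<in> carrier_vec k"
  shows "\<exists>w\<in>carrier_vec r. W *\<^sub>v joinv N k x (H *\<^sub>v x) = X *\<^sub>v w"
proof -
  define x' where "x' = vec k (\<lambda>l. x$l / s l)"
  have x': "x' \<in> carrier_vec k" unfolding x'_def by simp
  define z where "z = Pi *\<^sub>v x'"
  have z: "z \<in> carrier_vec d" unfolding z_def using Pi x' by simp
  have P1z: "Phi1 *\<^sub>v z = x'" unfolding z_def using assoc_mult_mat_vec[OF Phi1 Pi x', symmetric] PP x' by simp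
  define F where "F = Phi2 * Pi"
  have F: "F \<in> carrier_mat (m-k) k" unfolding F_def using Phi2 Pi by simp
  have P2z: "Phi2 *\<^sub>v z = F *\<^sub>v x'" unfolding z_def F_def using assoc_mult_mat_vec[OF Phi2 Pi x'] by simp
  have Hd': "H = mat (N-k) k (\<lambda>(j,l). e (j+k) * F $$ (j,l) / s l)" unfolding Hd F_def ..
  have "vec N (\<lambda>i. e i * (\<Psi> z) $ i) = joinv N k x (H *\<^sub>v x)"
  proof (rule eq_vecI)
    fix i assume "i < dim_vec (joinv N k x (H *\<^sub>v x))"
    hence i: "i < N" by simp
    show "vec N (\<lambda>i. e i * (\<Psi> z) $ i) $ i = joinv N k x (H *\<^sub>v x) $ i"
    proof (cases "i < k")
      case True
      have "(\<Psi> z) $ i = x$i / s i" using psi1[OF z True] P1z True unfolding x'_def by simp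
      moreover have "joinv N k x (H *\<^sub>v x) $ i = x $ i" unfolding joinv_def using i True by simp
      moreover have "vec N (\<lambda>i. e i * (\<Psi> z) $ i) $ i = e i * (\<Psi> z) $ i" using i by simp
      ultimately show ?thesis using es[OF True] s[OF True] by simp
    next
      case False
      define j where "j = i - k"
      have j: "j < N - k" "j < m - k" "i = j + k" unfolding j_def using False i Nm by auto
      have "(\<Psi> z) $ i = (F *\<^sub>v x') $ j" using psi2[OF z j(2)] P2z j(3) by simp
      also have "\<dots> = (\<Sum>l<k. F $$ (j,l) * (x$l / s l))"
        using F j unfolding x'_def by (auto simp: sp_def' intro!: sum.cong)
      finally have 1: "e i * (\<Psi> z) $ i = (\<Sum>l<k. e (j+k) * F $$ (j,l) / s l * x$l)"
        using j(3) by (simp add: sum_distrib_left mult_ac)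
      have 2: "(H *\<^sub>v x) $ j = (\<Sum>l<k. e (j+k) * F $$ (j,l) / s l * x$l)"
        unfolding Hd' using j x by (auto simp: sp_def' intro!: sum.cong)
      have 3: "joinv N k x (H *\<^sub>v x) $ i = (H *\<^sub>v x) $ j" unfolding joinv_def using i False by (simp add: j_def)
      have 4: "vec N (\<lambda>i. e i * (\<Psi> z) $ i) $ i = e i * (\<Psi> z) $ i" using i by simp
      show ?thesis unfolding 3 4 2 1 ..
    qed
  qed simp
  thus ?thesis using rng[OF z] by simp
qed



lemma sig_mult: fixes Sig :: "real mat"
  assumes Sig: "Sig \<in> carrier_mat m n"
      "\<And>i j. i < m \<Longrightarrow> j < n \<Longrightarrow> i \<noteq> j \<Longrightarrow> Sig $$ (i,j) = 0"
      "\<And>i. i < n \<Longrightarrow> Sig $$ (i,i) = \<sigma> (Suc i)"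
    and t: "t \<in> carrier_vec n" and i: "i < m"
  shows "(Sig *\<^sub>v t) $ i = (if i < n then \<sigma> (Suc i) * t $ i else 0)"
proof -
  have "(Sig *\<^sub>v t) $ i = (\<Sum>j<n. Sig $$ (i,j) * t $ j)" using Sig(1) t i by (auto simp: sp_def' intro!: sum.cong)
  also have "\<dots> = (\<Sum>j<n. if j = i then Sig $$ (i,j) * t $ j else 0)"
    using Sig(2)[of i] i by (intro sum.cong) auto
  also have "\<dots> = (if i < n then \<sigma> (Suc i) * t $ i else 0)" using Sig(3)[of i] by (simp add: sum.delta)
  finally show ?thesis .
qed

lemma sigT_mult: fixes Sig :: "real mat"
  assumes Sig: "Sig \<in> carrier_mat m n"
      "\<And>i j. i < m \<Longrightarrow> j < n \<Longrightarrow> i \<noteq> j \<Longrightarrow> Sig $$ (i,j) = 0"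
      "\<And>i. i < n \<Longrightarrow> Sig $$ (i,i) = \<sigma> (Suc i)"
    and nm: "n \<le> m" and s: "s \<in> carrier_vec m" and i: "i < n"
  shows "(Sig\<^sup>T *\<^sub>v s) $ i = \<sigma> (Suc i) * s $ i"
proof -
  have "(Sig\<^sup>T *\<^sub>v s) $ i = (\<Sum>l<m. Sig $$ (l,i) * s $ l)" using Sig(1) s i by (auto simp: sp_def' intro!: sum.cong)
  also have "\<dots> = (\<Sum>l<m. if l = i then Sig $$ (l,i) * s $ l else 0)"
    using Sig(2)[of _ i] i by (intro sum.cong) auto
  also have "\<dots> = \<sigma> (Suc i) * s $ i" using Sig(3)[of i] i nm by (simp add: sum.delta)
  finally show ?thesis .
qed

lemma svd_A: fixes A U Sig V :: "real mat"
  assumes U: "U \<in> carrier_mat m m" and V: "V \<in> carrier_mat n n" "V\<^sup>T * V = 1\<^sub>m n"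
  and Sig: "Sig \<in> carrier_mat m n" and svd: "A = U * Sig * V\<^sup>T" and t: "t \<in> carrier_vec n"
  shows "A *\<^sub>v (V *\<^sub>v t) = U *\<^sub>v (Sig *\<^sub>v t)"
proof -
  have Vt: "V\<^sup>T \<in> carrier_mat n n" using V by auto
  have "A *\<^sub>v (V *\<^sub>v t) = U *\<^sub>v (Sig *\<^sub>v (V\<^sup>T *\<^sub>v (V *\<^sub>v t)))"
    unfolding svd using U Sig Vt V t by (simp add: assoc_mult_mat_vec[of _ m n _ n] assoc_mult_mat_vec[of _ m m _ n])
  also have "V\<^sup>T *\<^sub>v (V *\<^sub>v t) = t" using orth_inv[OF V t] .
  finally show ?thesis .
qed

lemma svd_At: fixes A U Sig V :: "real mat"
  assumes U: "U \<in> carrier_mat m m" "U\<^sup>T * U = 1\<^sub>m m" and V: "V \<in> carrier_mat n n"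
  and Sig: "Sig \<in> carrier_mat m n" and svd: "A = U * Sig * V\<^sup>T" and s: "s \<in> carrier_vec m"
  shows "A\<^sup>T *\<^sub>v (U *\<^sub>v s) = V *\<^sub>v (Sig\<^sup>T *\<^sub>v s)"
proof -
  have "A\<^sup>T = V * Sig\<^sup>T * U\<^sup>T"
  proof -
    have "A\<^sup>T = (V\<^sup>T)\<^sup>T * (U * Sig)\<^sup>T" unfolding svd using U Sig V by (intro transpose_mult) auto
    also have "(U * Sig)\<^sup>T = Sig\<^sup>T * U\<^sup>T" using U Sig by (intro transpose_mult) auto
    finally show ?thesis using V Sig U by (simp add: assoc_mult_mat[of _ n n _ m _ m])
  qed
  hence "A\<^sup>T *\<^sub>v (U *\<^sub>v s) = V *\<^sub>v (Sig\<^sup>T *\<^sub>v (U\<^sup>T *\<^sub>v (U *\<^sub>v s)))"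
    using U Sig V s by (simp add: assoc_mult_mat_vec[of _ n m _ m] assoc_mult_mat_vec[of _ n n _ m])
  also have "U\<^sup>T *\<^sub>v (U *\<^sub>v s) = s" using orth_inv[OF U s] .
  finally show ?thesis .
qed



lemma svd_pow: fixes A U Sig V :: "real mat"
  assumes A: "A \<in> carrier_mat m n" and U: "U \<in> carrier_mat m m" "U\<^sup>T * U = 1\<^sub>m m"
  and V: "V \<in> carrier_mat n n" "V\<^sup>T * V = 1\<^sub>m n"
  and Sig: "Sig \<in> carrier_mat m n"
      "\<And>i j. i < m \<Longrightarrow> j < n \<Longrightarrow> i \<noteq> j \<Longrightarrow> Sig $$ (i,j) = 0"
      "\<And>i. i < n \<Longrightarrow> Sig $$ (i,i) = \<sigma> (Suc i)"
  and nm: "n \<le> m" and svd: "A = U * Sig * V\<^sup>T"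
  shows "t \<in> carrier_vec n \<Longrightarrow> ((A\<^sup>T * A) ^\<^sub>m q) *\<^sub>v (V *\<^sub>v t) = V *\<^sub>v vec n (\<lambda>i. \<sigma> (Suc i)^(2*q) * t $ i)"
proof (induction q arbitrary: t)
  case 0
  have "vec n (\<lambda>i. \<sigma> (Suc i)^(2*0) * t $ i) = t" using 0 by (intro eq_vecI) auto
  thus ?case using A V 0 by simp
next
  case (Suc q)
  have AtA: "A\<^sup>T * A \<in> carrier_mat n n" using A by auto
  define t2 where "t2 = vec n (\<lambda>i. \<sigma> (Suc i)^2 * t $ i)"
  have t2: "t2 \<in> carrier_vec n" unfolding t2_def by simp
  have "(A\<^sup>T * A) *\<^sub>v (V *\<^sub>v t) = A\<^sup>T *\<^sub>v (A *\<^sub>v (V *\<^sub>v t))" using A V Suc.prems by (simp add: assoc_mult_mat_vec[of _ n m _ n])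
  also have "A *\<^sub>v (V *\<^sub>v t) = U *\<^sub>v (Sig *\<^sub>v t)" by (rule svd_A[OF U(1) V Sig(1) svd Suc.prems])
  also have "A\<^sup>T *\<^sub>v (U *\<^sub>v (Sig *\<^sub>v t)) = V *\<^sub>v (Sig\<^sup>T *\<^sub>v (Sig *\<^sub>v t))"
    by (rule svd_At[OF U V(1) Sig(1) svd]) (use Sig Suc.prems in auto)
  also have "Sig\<^sup>T *\<^sub>v (Sig *\<^sub>v t) = t2"
  proof (rule eq_vecI)
    fix i assume "i < dim_vec t2"
    hence i: "i < n" unfolding t2_def by simp
    have "(Sig\<^sup>T *\<^sub>v (Sig *\<^sub>v t)) $ i = \<sigma> (Suc i) * (Sig *\<^sub>v t) $ i"
      by (rule sigT_mult[OF Sig nm _ i]) (use Sig Suc.prems in auto)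
    also have "(Sig *\<^sub>v t) $ i = \<sigma> (Suc i) * t $ i"
      using sig_mult[OF Sig Suc.prems, of i] i nm by simp
    finally show "(Sig\<^sup>T *\<^sub>v (Sig *\<^sub>v t)) $ i = t2 $ i" unfolding t2_def using i by (simp add: power2_eq_square)
  qed (use Sig in \<open>auto simp: t2_def\<close>)
  finally have 1: "(A\<^sup>T * A) *\<^sub>v (V *\<^sub>v t) = V *\<^sub>v t2" .
  have "((A\<^sup>T * A) ^\<^sub>m Suc q) *\<^sub>v (V *\<^sub>v t) = ((A\<^sup>T * A) ^\<^sub>m q) *\<^sub>v ((A\<^sup>T * A) *\<^sub>v (V *\<^sub>v t))"
    using AtA V Suc.prems by (simp add: assoc_mult_mat_vec[of _ n n _ n])
  also have "\<dots> = V *\<^sub>v vec n (\<lambda>i. \<sigma> (Suc i)^(2*q) * t2 $ i)" unfolding 1 by (rule Suc.IH[OF t2])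
  also have "vec n (\<lambda>i. \<sigma> (Suc i)^(2*q) * t2 $ i) = vec n (\<lambda>i. \<sigma> (Suc i)^(2*Suc q) * t $ i)"
  proof -
    have pw: "x^(2*Suc q) = x^(2*q) * x^2" for x :: real
    proof -
      have "2 * Suc q = 2*q + 2" by simp
      thus ?thesis by (simp only: power_add)
    qed
    show ?thesis unfolding t2_def by (intro eq_vecI) (simp_all add: pw mult.assoc power2_eq_square)
  qed
  finally show ?case .
qed



theorem theorem3:
  fixes A \<Phi> U \<Sigma> V Pbar Q R Ptil Rtil P L :: "real mat"
    and m n k p d q :: nat
    and \<sigma> :: "nat \<Rightarrow> real"
  assumes dims: "A \<in> carrier_mat m n" "m \<ge> n"
    (* full SVD  A = U \<Sigma> V^T *)
    and U: "U \<in> carrier_mat m m" "U\<^sup>T * U = 1\<^sub>m m" "U * U\<^sup>T = 1\<^sub>m m"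
    and V: "V \<in> carrier_mat n n" "V\<^sup>T * V = 1\<^sub>m n" "V * V\<^sup>T = 1\<^sub>m n"
    and Sig: "\<Sigma> \<in> carrier_mat m n"
      "\<And>i j. i < m \<Longrightarrow> j < n \<Longrightarrow> i \<noteq> j \<Longrightarrow> \<Sigma> $$ (i,j) = 0"
      "\<And>i. i < n \<Longrightarrow> \<Sigma> $$ (i,i) = \<sigma> (Suc i)"
      "\<And>i j. 1 \<le> i \<Longrightarrow> i \<le> j \<Longrightarrow> j \<le> n \<Longrightarrow> \<sigma> j \<le> \<sigma> i"
      "\<And>i. 1 \<le> i \<Longrightarrow> i \<le> n \<Longrightarrow> 0 \<le> \<sigma> i"
    and svd: "A = U * \<Sigma> * V\<^sup>T"
    (* parameters *)
    and k: "1 \<le> k" "\<sigma> k > 0"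
    and p: "1 \<le> p" and d: "d = k + p" "d < n"
    (* RU-QLP *)
    and Phi: "\<Phi> \<in> carrier_mat m d"
    and Pbar: "Pbar \<in> carrier_mat n d" "orthonormal_cols Pbar"
      "mat_range Pbar = mat_range ((A\<^sup>T * A) ^\<^sub>m q * A\<^sup>T * \<Phi>)"
      "mrank n ((A\<^sup>T * A) ^\<^sub>m q * A\<^sup>T * \<Phi>) = d"
    and QR: "Q \<in> carrier_mat m d" "orthonormal_cols Q" "R \<in> carrier_mat d d"
      "upper_triangular R" "A * Pbar = Q * R"
    and QR2: "Ptil \<in> carrier_mat d d" "orthonormal_cols Ptil" "Rtil \<in> carrier_mat d d"
      "upper_triangular Rtil" "R\<^sup>T = Ptil * Rtil"
    and PL: "P = Pbar * Ptil" "L = Rtil\<^sup>T"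
    (* rank condition on \<Phi>_1 = U_k^T \<Phi> *)
    and rk: "mrank k ((first_cols k U)\<^sup>T * \<Phi>) = k"
  shows
    "let Uk = first_cols k U; Vk = first_cols k V;
         \<Phi>1 = Uk\<^sup>T * \<Phi>; \<Phi>2 = (rest_cols k U)\<^sup>T * \<Phi>;
         \<Sigma>perp = mat (m - k) (n - k) (\<lambda>(i,j). \<Sigma> $$ (i + k, j + k));
         c = norm2 (\<Phi>2 * pinv \<Phi>1);
         \<delta>k = \<sigma> (k + 1) / \<sigma> k; \<gamma> = \<sigma> n / \<sigma> 1
     in norm2 (sin_angle_mat Q Uk) \<le>
          \<delta>k ^ (2*q+1) * c * norm2 \<Sigma>perp / (\<sigma> k * sqrt (1 + \<gamma> ^ (4*q+4) * c\<^sup>2))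
      \<and> normF (sin_angle_mat Q Uk) \<le>
          \<delta>k ^ (2*q+1) * c * normF \<Sigma>perp / (\<sigma> k * sqrt (1 + \<gamma> ^ (4*q+4) * c\<^sup>2))
      \<and> norm2 (sin_angle_mat P Vk) \<le>
          \<delta>k ^ (2*q) * c * norm2 \<Sigma>perp / (\<sigma> k * sqrt (1 + \<gamma> ^ (4*q+2) * c\<^sup>2))
      \<and> normF (sin_angle_mat P Vk) \<le>
          \<delta>k ^ (2*q) * c * normF \<Sigma>perp / (\<sigma> k * sqrt (1 + \<gamma> ^ (4*q+2) * c\<^sup>2))"
proof -
  define Uk where "Uk = first_cols k U"
  define Vk where "Vk = first_cols k V"
  define \<Phi>1 where "\<Phi>1 = Uk\<^sup>T * \<Phi>"
  define \<Phi>2 where "\<Phi>2 = (rest_cols k U)\<^sup>T * \<Phi>"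
  define \<Sigma>perp where "\<Sigma>perp = mat (m - k) (n - k) (\<lambda>(i,j). \<Sigma> $$ (i + k, j + k))"
  have kn: "k < n" using d p by simp
  have km: "k \<le> m" using kn dims by simp
  have k0: "0 < k" using k by simp
  have Uk: "Uk \<in> carrier_mat m k" unfolding Uk_def using U by simp
  have Ur: "rest_cols k U \<in> carrier_mat m (m-k)" unfolding rest_cols_def using U by simp
  have P1: "\<Phi>1 \<in> carrier_mat k d" unfolding \<Phi>1_def using Uk Phi by simp
  have P2: "\<Phi>2 \<in> carrier_mat (m-k) d" unfolding \<Phi>2_def using Ur Phi by simp
  have rk1: "mrank k \<Phi>1 = k" unfolding \<Phi>1_def Uk_def using rk .
  define Pi where "Pi = pinv \<Phi>1"
  have Pi: "Pi \<in> carrier_mat d k" "\<Phi>1 * Pi = 1\<^sub>m k" unfolding Pi_def using pinv_right[OF P1 rk1] by auto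
  define F where "F = \<Phi>2 * Pi"
  have F: "F \<in> carrier_mat (m-k) k" unfolding F_def using P2 Pi by simp
  define c where "c = norm2 F"
  have c0: "c \<ge> 0" unfolding c_def using F k0 by (intro norm2_ge0') simp
  define \<Psi> where "\<Psi> z = U\<^sup>T *\<^sub>v (\<Phi> *\<^sub>v z)" for z
  have psi1: "(\<Phi>1 *\<^sub>v z) $ i = (\<Psi> z) $ i" if z: "z \<in> carrier_vec d" and i: "i < k" for z i
  proof -
    have "\<Phi>1 *\<^sub>v z = Uk\<^sup>T *\<^sub>v (\<Phi> *\<^sub>v z)" unfolding \<Phi>1_def using Uk Phi z by (simp add: assoc_mult_mat_vec[of _ k m _ d])
    moreover have "col Uk i = col U i" unfolding Uk_def first_cols_def using i km U by (intro eq_vecI) auto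
    ultimately show ?thesis unfolding \<Psi>_def using i Uk U km by simp
  qed
  have psi2: "(\<Phi>2 *\<^sub>v z) $ j = (\<Psi> z) $ (j+k)" if z: "z \<in> carrier_vec d" and j: "j < m-k" for z j
  proof -
    have "\<Phi>2 *\<^sub>v z = (rest_cols k U)\<^sup>T *\<^sub>v (\<Phi> *\<^sub>v z)" unfolding \<Phi>2_def using Ur Phi z by (simp add: assoc_mult_mat_vec[of _ "m-k" m _ d])
    moreover have "col (rest_cols k U) j = col U (j+k)" unfolding rest_cols_def using j km U by (intro eq_vecI) auto
    ultimately show ?thesis unfolding \<Psi>_def using j Ur U km by simp
  qed
  define Mq where "Mq = (A\<^sup>T * A) ^\<^sub>m q * A\<^sup>T * \<Phi>"
  have AtA: "A\<^sup>T * A \<in> carrier_mat n n" using dims by auto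
  have Mq: "Mq \<in> carrier_mat n d" unfolding Mq_def using AtA dims Phi by auto
  have Mqz: "Mq *\<^sub>v z = V *\<^sub>v vec n (\<lambda>i. \<sigma> (Suc i)^(2*q+1) * (\<Psi> z) $ i)" if z: "z \<in> carrier_vec d" for z
  proof -
    have psi: "\<Psi> z \<in> carrier_vec m" unfolding \<Psi>_def using U Phi z by simp
    have At: "A\<^sup>T \<in> carrier_mat n m" using dims by auto
    have Pw: "(A\<^sup>T * A) ^\<^sub>m q \<in> carrier_mat n n" using AtA by simp
    have "Mq *\<^sub>v z = ((A\<^sup>T * A) ^\<^sub>m q * A\<^sup>T) *\<^sub>v (\<Phi> *\<^sub>v z)"
      unfolding Mq_def using assoc_mult_mat_vec[OF mult_carrier_mat[OF Pw At] Phi z] .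
    also have "\<dots> = (A\<^sup>T * A) ^\<^sub>m q *\<^sub>v (A\<^sup>T *\<^sub>v (\<Phi> *\<^sub>v z))"
      using assoc_mult_mat_vec[OF Pw At, of "\<Phi> *\<^sub>v z"] Phi z by simp
    finally have "Mq *\<^sub>v z = (A\<^sup>T * A) ^\<^sub>m q *\<^sub>v (A\<^sup>T *\<^sub>v (\<Phi> *\<^sub>v z))" .
    also have "\<Phi> *\<^sub>v z = U *\<^sub>v \<Psi> z"
    proof -
      have "U *\<^sub>v \<Psi> z = (U * U\<^sup>T) *\<^sub>v (\<Phi> *\<^sub>v z)" unfolding \<Psi>_def
        using assoc_mult_mat_vec[of U m m "U\<^sup>T" m "\<Phi> *\<^sub>v z"] U Phi z by simp
      thus ?thesis using U Phi z by simp
    qed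
    also have "A\<^sup>T *\<^sub>v (U *\<^sub>v \<Psi> z) = V *\<^sub>v (\<Sigma>\<^sup>T *\<^sub>v \<Psi> z)" by (rule svd_At[OF U(1,2) V(1) Sig(1) svd psi])
    also have "(A\<^sup>T * A) ^\<^sub>m q *\<^sub>v (V *\<^sub>v (\<Sigma>\<^sup>T *\<^sub>v \<Psi> z)) = V *\<^sub>v vec n (\<lambda>i. \<sigma> (Suc i)^(2*q) * (\<Sigma>\<^sup>T *\<^sub>v \<Psi> z) $ i)"
      by (rule svd_pow[OF dims(1) U(1,2) V(1,2) Sig(1,2,3) dims(2) svd]) (use Sig psi in auto)
    also have "vec n (\<lambda>i. \<sigma> (Suc i)^(2*q) * (\<Sigma>\<^sup>T *\<^sub>v \<Psi> z) $ i) = vec n (\<lambda>i. \<sigma> (Suc i)^(2*q+1) * (\<Psi> z) $ i)"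
      using sigT_mult[OF Sig(1,2,3) dims(2) psi] by (intro eq_vecI) auto
    finally show ?thesis .
  qed
  define eQ where "eQ i = (if i < n then \<sigma> (Suc i)^(2*q+2) else 0)" for i
  define eP where "eP i = (if i < n then \<sigma> (Suc i)^(2*q+1) else 0)" for i
  have AMqz: "A *\<^sub>v (Mq *\<^sub>v z) = U *\<^sub>v vec m (\<lambda>i. eQ i * (\<Psi> z) $ i)" if z: "z \<in> carrier_vec d" for z
  proof -
    let ?t = "vec n (\<lambda>i. \<sigma> (Suc i)^(2*q+1) * (\<Psi> z) $ i)"
    have "A *\<^sub>v (Mq *\<^sub>v z) = U *\<^sub>v (\<Sigma> *\<^sub>v ?t)" unfolding Mqz[OF z] by (rule svd_A[OF U(1) V(1,2) Sig(1) svd]) simp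
    also have "\<Sigma> *\<^sub>v ?t = vec m (\<lambda>i. eQ i * (\<Psi> z) $ i)"
      using sig_mult[OF Sig(1,2,3), of ?t] Sig(1) by (intro eq_vecI) (auto simp: eQ_def)
    finally show ?thesis .
  qed
  have rngQ: "\<exists>w\<in>carrier_vec d. U *\<^sub>v vec m (\<lambda>i. eQ i * (\<Psi> z) $ i) = Q *\<^sub>v w" if z: "z \<in> carrier_vec d" for z
  proof -
    have "Mq *\<^sub>v z \<in> mat_range Mq" unfolding mat_range_def using Mq z by auto
    hence "Mq *\<^sub>v z \<in> mat_range Pbar" using Pbar(3) unfolding Mq_def by simp
    then obtain w0 where w0: "w0 \<in> carrier_vec d" "Mq *\<^sub>v z = Pbar *\<^sub>v w0" unfolding mat_range_def using Pbar(1) by auto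
    have "A *\<^sub>v (Mq *\<^sub>v z) = (A * Pbar) *\<^sub>v w0" unfolding w0(2) using dims Pbar(1) w0 by (simp add: assoc_mult_mat_vec[of _ m n _ d])
    also have "\<dots> = Q *\<^sub>v (R *\<^sub>v w0)" unfolding QR(5) using QR(1,3) w0 by (simp add: assoc_mult_mat_vec[of _ m d _ d])
    finally show ?thesis using AMqz[OF z] QR(3) w0 by (intro bexI[of _ "R *\<^sub>v w0"]) auto
  qed
  have PtPt: "Ptil * Ptil\<^sup>T = 1\<^sub>m d"
    using mat_mult_left_right_inverse[of "Ptil\<^sup>T" d Ptil] QR2(1,2) unfolding orthonormal_cols_def by auto
  have PPt: "P * Ptil\<^sup>T = Pbar" unfolding PL(1) using Pbar(1) QR2(1) PtPt by (simp add: assoc_mult_mat[of _ n d _ d _ d])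
  have rngP: "\<exists>w\<in>carrier_vec d. V *\<^sub>v vec n (\<lambda>i. eP i * (\<Psi> z) $ i) = P *\<^sub>v w" if z: "z \<in> carrier_vec d" for z
  proof -
    have "Mq *\<^sub>v z \<in> mat_range Mq" unfolding mat_range_def using Mq z by auto
    hence "Mq *\<^sub>v z \<in> mat_range Pbar" using Pbar(3) unfolding Mq_def by simp
    then obtain w0 where w0: "w0 \<in> carrier_vec d" "Mq *\<^sub>v z = Pbar *\<^sub>v w0" unfolding mat_range_def using Pbar(1) by auto
    have "vec n (\<lambda>i. eP i * (\<Psi> z) $ i) = vec n (\<lambda>i. \<sigma> (Suc i)^(2*q+1) * (\<Psi> z) $ i)"
      unfolding eP_def by (intro eq_vecI) auto
    hence "V *\<^sub>v vec n (\<lambda>i. eP i * (\<Psi> z) $ i) = Pbar *\<^sub>v w0" using Mqz[OF z] w0(2) by simp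
    also have "\<dots> = P *\<^sub>v (Ptil\<^sup>T *\<^sub>v w0)" unfolding PPt[symmetric] using PL(1) Pbar(1) QR2(1) w0
      by (simp add: assoc_mult_mat_vec[of _ n d _ d])
    finally show ?thesis using QR2(1) w0 by (intro bexI[of _ "Ptil\<^sup>T *\<^sub>v w0"]) auto
  qed
  have mono: "\<And>i j. 1 \<le> i \<Longrightarrow> i \<le> j \<Longrightarrow> j \<le> n \<Longrightarrow> \<sigma> j \<le> \<sigma> i" using Sig(4) .
  have nonneg: "\<And>i. 1 \<le> i \<Longrightarrow> i \<le> n \<Longrightarrow> 0 \<le> \<sigma> i" using Sig(5) .
  have spos: "\<sigma> (Suc l) \<ge> \<sigma> k" if "l < k" for l using mono[of "Suc l" k] that kn by simp
  have Sp: "\<Sigma>perp \<in> carrier_mat (m-k) (n-k)" unfolding \<Sigma>perp_def by simp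
  have S2: "norm2 \<Sigma>perp \<ge> \<sigma> (k+1)"
  proof -
    let ?e = "unit_vec (n-k) 0 :: real vec"
    have e: "?e \<in> carrier_vec (dim_col \<Sigma>perp)" using Sp by simp
    have e1: "vnorm ?e = 1"
    proof -
      have "(\<Sum>i<n-k. (if i = 0 then 1 else 0::real)^2) = (\<Sum>i<n-k. (if i = 0 then 1 else 0))"
        by (rule sum.cong) auto
      thus ?thesis unfolding vnorm_def sp_self using kn by (simp add: unit_vec_def)
    qed
    have "(\<Sigma>perp *\<^sub>v ?e) $ 0 = \<Sigma>perp $$ (0,0)" using mult_unit_index[OF Sp, of 0 0] kn km dims by simp
    also have "\<dots> = \<sigma> (k+1)" unfolding \<Sigma>perp_def using kn km dims Sig(3)[of k] by simp
    finally have e0: "(\<Sigma>perp *\<^sub>v ?e) $ 0 = \<sigma> (k+1)" .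
    have "((\<Sigma>perp *\<^sub>v ?e) $ 0)^2 \<le> (\<Sigma>perp *\<^sub>v ?e) \<bullet> (\<Sigma>perp *\<^sub>v ?e)" unfolding sp_self
      using Sp kn km dims by (intro member_le_sum[of 0 "{..<dim_vec (\<Sigma>perp *\<^sub>v ?e)}" "\<lambda>i. ((\<Sigma>perp *\<^sub>v ?e) $ i)^2"]) auto
    hence "\<bar>(\<Sigma>perp *\<^sub>v ?e) $ 0\<bar> \<le> vnorm (\<Sigma>perp *\<^sub>v ?e)" unfolding vnorm_def by (simp add: real_le_rsqrt)
    also have "\<dots> \<le> norm2 \<Sigma>perp * vnorm ?e" using norm2_upper[OF e] .
    finally show ?thesis unfolding e0 e1 by simp
  qed
  have SF: "(normF \<Sigma>perp)^2 \<ge> (\<Sum>j<n-k. \<sigma> (j+k+1)^2)"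
  proof -
    have "(normF \<Sigma>perp)^2 = (\<Sum>i<m-k. \<Sum>j<n-k. (\<Sigma>perp $$ (i,j))^2)" unfolding normF_sq using Sp by simp
    also have "\<dots> = (\<Sum>j<n-k. \<Sum>i<m-k. (\<Sigma>perp $$ (i,j))^2)" by (rule sum.swap)
    also have "\<dots> \<ge> (\<Sum>j<n-k. (\<Sigma>perp $$ (j,j))^2)"
      using kn km dims by (intro sum_mono member_le_sum) auto
    also have "(\<Sum>j<n-k. (\<Sigma>perp $$ (j,j))^2) = (\<Sum>j<n-k. \<sigma> (j+k+1)^2)"
      unfolding \<Sigma>perp_def using kn km dims Sig(3) by (intro sum.cong) auto
    finally show ?thesis .
  qed
  define aQ where "aQ = 2*q+2"
  define sQ where "sQ l = \<sigma> (Suc l)^aQ" for l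
  define HQ where "HQ = mat (m-k) k (\<lambda>(j,l). eQ (j+k) * (\<Phi>2 * Pi) $$ (j,l) / sQ l)"
  have HQ: "HQ \<in> carrier_mat (m-k) k" unfolding HQ_def by simp
  have hypQ: "\<exists>w\<in>carrier_vec d. U *\<^sub>v joinv m k x (HQ *\<^sub>v x) = Q *\<^sub>v w" if x: "x \<in> carrier_vec k" for x
  proof (rule build_hyp[OF P1 Pi(1,2) P2 km order_refl psi1 psi2 _ _ rngQ HQ_def x])
    show "sQ i \<noteq> 0" if "i < k" for i using spos[OF that] k unfolding sQ_def by simp
    show "eQ i = sQ i" if "i < k" for i using that kn unfolding eQ_def sQ_def aQ_def by simp
  qed
  have QtQ: "Q\<^sup>T * Q = 1\<^sub>m d" using QR(1,2) unfolding orthonormal_cols_def by simp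
  have S0: "\<sigma> k ^ a > 0" for a using k(2) by simp
  have spow: "\<sigma> (Suc l) ^ a \<ge> \<sigma> k ^ a" if "l < k" for l a using spos[OF that] k(2) by (intro power_mono) auto
  have Eb: "\<bar>(if i < n then \<sigma> (Suc i)^a else 0)\<bar> \<le> \<sigma> (k+1) ^ a" if "k \<le> i" for i a
  proof (cases "i < n")
    case True
    have "0 \<le> \<sigma> (Suc i)" using nonneg[of "Suc i"] True by simp
    moreover have "\<sigma> (Suc i) \<le> \<sigma> (k+1)" using mono[of "k+1" "Suc i"] True that by simp
    ultimately show ?thesis using True by (simp add: power_mono)
  next
    case False
    thus ?thesis using nonneg[of "k+1"] kn by simp
  qed
  have eQa: "eQ i = (if i < n then \<sigma> (Suc i)^aQ else 0)" for i unfolding eQ_def aQ_def ..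
  have pm: "\<sigma> k^(2*a) = (\<sigma> k^a)^2" for a by (metis power_mult mult.commute)
  have spowQ: "\<And>l. l < k \<Longrightarrow> \<sigma> k^aQ \<le> sQ l" using spow unfolding sQ_def by simp
  have EbQ: "\<And>j. j < m - k \<Longrightarrow> \<bar>eQ (j+k)\<bar> \<le> \<sigma>(k+1)^aQ" using Eb unfolding eQa by simp
  have E0Q: "0 \<le> \<sigma>(k+1)^aQ" using nonneg[of "k+1"] kn by simp
  have HQF: "HQ = mat (m-k) k (\<lambda>(j,l). eQ (j+k) * F $$ (j,l) / sQ l)" unfolding HQ_def F_def ..
  have partQ: "norm2 (sin_angle_mat Q (first_cols k U)) \<le> (\<sigma>(k+1)/\<sigma> k)^(aQ-1) * c * norm2 \<Sigma>perp / (\<sigma> k * sqrt(1 + (\<sigma> n/\<sigma> 1)^(2*aQ) * c^2))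
   \<and> normF (sin_angle_mat Q (first_cols k U)) \<le> (\<sigma>(k+1)/\<sigma> k)^(aQ-1) * c * normF \<Sigma>perp / (\<sigma> k * sqrt(1 + (\<sigma> n/\<sigma> 1)^(2*aQ) * c^2))"
    apply (rule final_part[where X=Q and W=U and N=m and r=d and k=k and n=n and H=HQ and \<sigma>=\<sigma> and a=aQ and c=c
       and nTwo="norm2 \<Sigma>perp" and nFro="normF \<Sigma>perp"])
    subgoal by (rule QR(1))
    subgoal by (rule QtQ)
    subgoal by (rule U(1))
    subgoal by (rule U(2))
    subgoal by (rule km)
    subgoal by (rule k0)
    subgoal by (rule kn)
    subgoal by (rule dims(2))
    subgoal by (rule HQ)
    subgoal by (rule hypQ)
    subgoal by (rule mono)
    subgoal by (rule nonneg)
    subgoal by (rule k(2))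
    subgoal unfolding aQ_def by simp
    subgoal by (rule c0)
    subgoal for j
    proof -
      assume j: "j < m - k"
      have "row HQ j \<bullet> row HQ j \<le> (eQ (j+k))^2 * (norm2 F)^2 / (\<sigma> k ^ aQ)^2"
        by (rule H_rows[OF F order_refl HQF spowQ S0 j])
      thus "row HQ j \<bullet> row HQ j \<le> (if j+k < n then \<sigma>(j+k+1)^aQ else 0)^2 * c^2 / \<sigma> k^(2*aQ)"
        unfolding eQa c_def pm by (cases "j+k < n") (simp_all add: mult.commute)
    qed
    subgoal for x
    proof -
      assume x: "x \<in> carrier_vec k"
      have "vnorm (HQ *\<^sub>v x) \<le> (\<sigma>(k+1)^aQ * norm2 F / \<sigma> k ^ aQ) * vnorm x"
        by (rule H_spec[OF F order_refl HQF spowQ S0 EbQ x E0Q k0])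
      thus "vnorm (HQ *\<^sub>v x) \<le> (\<sigma>(k+1)^aQ * c / \<sigma> k^aQ) * vnorm x" unfolding c_def .
    qed
    subgoal by (rule S2)
    subgoal by (rule normF_ge0)
    subgoal by (rule SF)
    done
  have kn': "k \<le> n" using kn by simp
  define aP where "aP = 2*q+1"
  define sP where "sP l = \<sigma> (Suc l)^aP" for l
  define HP where "HP = mat (n-k) k (\<lambda>(j,l). eP (j+k) * (\<Phi>2 * Pi) $$ (j,l) / sP l)"
  have HP: "HP \<in> carrier_mat (n-k) k" unfolding HP_def by simp
  have hypP: "\<exists>w\<in>carrier_vec d. V *\<^sub>v joinv n k x (HP *\<^sub>v x) = P *\<^sub>v w" if x: "x \<in> carrier_vec k" for x
  proof (rule build_hyp[OF P1 Pi(1,2) P2 kn' dims(2) psi1 psi2 _ _ rngP HP_def x])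
    show "sP i \<noteq> 0" if "i < k" for i using spos[OF that] k unfolding sP_def by simp
    show "eP i = sP i" if "i < k" for i using that kn unfolding eP_def sP_def aP_def by simp
  qed
  have PC: "P \<in> carrier_mat n d" unfolding PL(1) using Pbar(1) QR2(1) by simp
  have PtP: "P\<^sup>T * P = 1\<^sub>m d"
  proof -
    have "P\<^sup>T = Ptil\<^sup>T * Pbar\<^sup>T" unfolding PL(1) using transpose_mult[OF Pbar(1) QR2(1)] .
    have Pbt: "Pbar\<^sup>T \<in> carrier_mat d n" "Ptil\<^sup>T \<in> carrier_mat d d" using Pbar(1) QR2(1) by auto
    have "P\<^sup>T * P = (Ptil\<^sup>T * Pbar\<^sup>T) * (Pbar * Ptil)" unfolding PL(1) using \<open>P\<^sup>T = _\<close> unfolding PL(1) by simp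
    also have "\<dots> = Ptil\<^sup>T * (Pbar\<^sup>T * (Pbar * Ptil))" using assoc_mult_mat[OF Pbt(2) Pbt(1) mult_carrier_mat[OF Pbar(1) QR2(1)]] .
    also have "Pbar\<^sup>T * (Pbar * Ptil) = (Pbar\<^sup>T * Pbar) * Ptil" using assoc_mult_mat[OF Pbt(1) Pbar(1) QR2(1)] by simp
    also have "Pbar\<^sup>T * Pbar = 1\<^sub>m d" using Pbar(1,2) unfolding orthonormal_cols_def by simp
    finally show ?thesis using QR2(1,2) unfolding orthonormal_cols_def by simp
  qed
  have ePa: "eP i = (if i < n then \<sigma> (Suc i)^aP else 0)" for i unfolding eP_def aP_def ..
  have spowP: "\<And>l. l < k \<Longrightarrow> \<sigma> k^aP \<le> sP l" using spow unfolding sP_def by simp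
  have EbP: "\<And>j. j < n - k \<Longrightarrow> \<bar>eP (j+k)\<bar> \<le> \<sigma>(k+1)^aP" using Eb unfolding ePa by simp
  have E0P: "0 \<le> \<sigma>(k+1)^aP" using nonneg[of "k+1"] kn by simp
  have HPF: "HP = mat (n-k) k (\<lambda>(j,l). eP (j+k) * F $$ (j,l) / sP l)" unfolding HP_def F_def ..
  have nmk: "n - k \<le> m - k" using dims(2) by simp
  have partP: "norm2 (sin_angle_mat P (first_cols k V)) \<le> (\<sigma>(k+1)/\<sigma> k)^(aP-1) * c * norm2 \<Sigma>perp / (\<sigma> k * sqrt(1 + (\<sigma> n/\<sigma> 1)^(2*aP) * c^2))
   \<and> normF (sin_angle_mat P (first_cols k V)) \<le> (\<sigma>(k+1)/\<sigma> k)^(aP-1) * c * normF \<Sigma>perp / (\<sigma> k * sqrt(1 + (\<sigma> n/\<sigma> 1)^(2*aP) * c^2))"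
    apply (rule final_part[where X=P and W=V and N=n and r=d and k=k and n=n and H=HP and \<sigma>=\<sigma> and a=aP and c=c
       and nTwo="norm2 \<Sigma>perp" and nFro="normF \<Sigma>perp"])
    subgoal by (rule PC)
    subgoal by (rule PtP)
    subgoal by (rule V(1))
    subgoal by (rule V(2))
    subgoal by (rule kn')
    subgoal by (rule k0)
    subgoal by (rule kn)
    subgoal by simp
    subgoal by (rule HP)
    subgoal by (rule hypP)
    subgoal by (rule mono)
    subgoal by (rule nonneg)
    subgoal by (rule k(2))
    subgoal unfolding aP_def by simp
    subgoal by (rule c0)
    subgoal for j
    proof -
      assume j: "j < n - k"
      have "row HP j \<bullet> row HP j \<le> (eP (j+k))^2 * (norm2 F)^2 / (\<sigma> k ^ aP)^2"
        by (rule H_rows[OF F nmk HPF spowP S0 j])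
      thus "row HP j \<bullet> row HP j \<le> (if j+k < n then \<sigma>(j+k+1)^aP else 0)^2 * c^2 / \<sigma> k^(2*aP)"
        unfolding ePa c_def pm by (cases "j+k < n") (simp_all add: mult.commute)
    qed
    subgoal for x
    proof -
      assume x: "x \<in> carrier_vec k"
      have "vnorm (HP *\<^sub>v x) \<le> (\<sigma>(k+1)^aP * norm2 F / \<sigma> k ^ aP) * vnorm x"
        by (rule H_spec[OF F nmk HPF spowP S0 EbP x E0P k0])
      thus "vnorm (HP *\<^sub>v x) \<le> (\<sigma>(k+1)^aP * c / \<sigma> k^aP) * vnorm x" unfolding c_def .
    qed
    subgoal by (rule S2)
    subgoal by (rule normF_ge0)
    subgoal by (rule SF)
    done
  have e1: "aQ - 1 = 2*q+1" "2*aQ = 4*q+4" "aP - 1 = 2*q" "2*aP = 4*q+2" unfolding aQ_def aP_def by simp_all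
  show ?thesis
    unfolding Let_def Uk_def[symmetric] Vk_def[symmetric] \<Phi>1_def[symmetric] \<Phi>2_def[symmetric] Pi_def[symmetric]
      F_def[symmetric] c_def[symmetric] \<Sigma>perp_def[symmetric]
    using partQ partP unfolding e1 Uk_def[symmetric] Vk_def[symmetric] by blast
qed



end
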